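(* Let $q$ be an odd prime power, $\omega$ a non-square in $\mathbb F_q$, $\epsilon\in\mathbb F_{q^2}$ with $\epsilon^2=\omega$, and write $z=z_1+\epsilon z_2$ ($z_i\in\mathbb F_q$) for $z\in\mathbb F_{q^2}$. Let $\mathcal C: aX^2+bXY+cXZ+dYZ+eZ^2=0$ be a non-singular conic of $\mathrm{PG}(2,q^2)$ with $d=1$, $b\notin\mathbb F_q$, and $-bcd+ad^2+b^2e$ a nonzero square in $\mathbb F_{q^2}$. Put $A=-a_2b_1+a_1b_2$, $B=b_2c_1-b_1c_2-a_2d_1+a_1d_2$, $C=-c_2d_1+c_1d_2+b_2e_1-b_1e_2$, $D=d_2e_1-d_1e_2$, and let $\mathcal S\subset\mathrm{PG}(3,q)$ be the cubic surface in coordinates $(t_1:t_2:X:Z)$ with equation $$2t_1t_2(b_1X+d_1Z)-(t_1^2+\omega t_2^2)(b_2X+d_2Z)+AX^3+BX^2Z+CXZ^2+DZ^3=0.$$ Let $n_0$ be the number of points of $\mathrm{PG}(3,q)$ on $\mathcal S$ with $t_1=t_2=0$. If $\mathcal S$ is non-singular, then $E_q(\mathcal C)=\frac12\big(q^2+(\alpha-1)q-n_0\big)$ where either $n_0\in\{0,2\}$ and $\alpha\in\{-2,0,2,4\}$, or $n_0\in\{1,3\}$ and $\alpha\in\{-1,1,3,5,7\}$.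
   Context: $E_q(\mathcal C)$ is the number of points of $\mathrm{PG}(2,q)$ (canonically embedded in $\mathrm{PG}(2,q^2)$) external to $\mathcal C$, i.e. lying on two tangent lines of $\mathcal C$. *)

theory Defs
  imports "HOL-Algebra.Algebraic_Closure_Type"
begin

(* The subfield F_q inside a field of q^2 elements: fixed points of Frobenius x |-> x^q *)
definition subF :: "nat \<Rightarrow> 'b::field set" where
  "subF q = {x. x ^ q = x}"

definition comp1 :: "'b::field set \<Rightarrow> 'b \<Rightarrow> 'b \<Rightarrow> 'b" where
  "comp1 K eps z = (THE u. \<exists>v. u \<in> K \<and> v \<in> K \<and> z = u + eps * v)"
definition comp2 :: "'b::field set \<Rightarrow> 'b \<Rightarrow> 'b \<Rightarrow> 'b" where
  "comp2 K eps z = (THE v. \<exists>u. u \<in> K \<and> v \<in> K \<and> z = u + eps * v)"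

(* projective points as classes of nonzero vectors up to nonzero scalars from K *)
definition pclass3 :: "'b::field set \<Rightarrow> 'b \<times> 'b \<times> 'b \<Rightarrow> ('b \<times> 'b \<times> 'b) set" where
  "pclass3 K v = {(l * fst v, l * fst (snd v), l * snd (snd v)) | l. l \<in> K \<and> l \<noteq> 0}"
definition pclass4 :: "'b::field set \<Rightarrow> 'b \<times> 'b \<times> 'b \<times> 'b \<Rightarrow> ('b \<times> 'b \<times> 'b \<times> 'b) set" where
  "pclass4 K v = {(l * fst v, l * fst (snd v), l * fst (snd (snd v)), l * snd (snd (snd v))) | l. l \<in> K \<and> l \<noteq> 0}"

definition conicF :: "'b::field \<Rightarrow> 'b \<Rightarrow> 'b \<Rightarrow> 'b \<Rightarrow> 'b \<Rightarrow> 'b \<times> 'b \<times> 'b \<Rightarrow> 'b" where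
  "conicF a b c d e v = (case v of (x, y, z) \<Rightarrow>
     a * x^2 + b * x * y + c * x * z + d * y * z + e * z^2)"

definition conicGrad :: "'b::field \<Rightarrow> 'b \<Rightarrow> 'b \<Rightarrow> 'b \<Rightarrow> 'b \<Rightarrow> 'b \<times> 'b \<times> 'b \<Rightarrow> 'b \<times> 'b \<times> 'b" where
  "conicGrad a b c d e v = (case v of (x, y, z) \<Rightarrow>
     (2 * a * x + b * y + c * z, b * x + d * z, c * x + d * y + 2 * e * z))"

definition conic_nonsingular :: "'b::field \<Rightarrow> 'b \<Rightarrow> 'b \<Rightarrow> 'b \<Rightarrow> 'b \<Rightarrow> bool" where
  "conic_nonsingular a b c d e \<longleftrightarrow>
     (\<forall>v. v \<noteq> (0, 0, 0) \<longrightarrow> conicGrad a b c d e v \<noteq> (0, 0, 0))"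

(* tangent lines of the conic (lines given as projective classes of coefficient vectors) *)
definition tangent_lines :: "'b::field \<Rightarrow> 'b \<Rightarrow> 'b \<Rightarrow> 'b \<Rightarrow> 'b \<Rightarrow> ('b \<times> 'b \<times> 'b) set set" where
  "tangent_lines a b c d e =
     {pclass3 UNIV (conicGrad a b c d e v) | v. v \<noteq> (0, 0, 0) \<and> conicF a b c d e v = 0}"

definition incident :: "('b::field \<times> 'b \<times> 'b) set \<Rightarrow> ('b \<times> 'b \<times> 'b) set \<Rightarrow> bool" where
  "incident pt lin \<longleftrightarrow> (\<exists>v\<in>pt. \<exists>u\<in>lin.
     fst u * fst v + fst (snd u) * fst (snd v) + snd (snd u) * snd (snd v) = 0)"

(* points of PG(2,q), canonically embedded in PG(2,q^2) *)
definition PG2_sub :: "'b::field set \<Rightarrow> ('b \<times> 'b \<times> 'b) set set" where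
  "PG2_sub K = {pclass3 UNIV v | v. v \<noteq> (0, 0, 0) \<and>
                  fst v \<in> K \<and> fst (snd v) \<in> K \<and> snd (snd v) \<in> K}"

definition Eq_conic :: "nat \<Rightarrow> 'b::field \<Rightarrow> 'b \<Rightarrow> 'b \<Rightarrow> 'b \<Rightarrow> 'b \<Rightarrow> nat" where
  "Eq_conic q a b c d e =
     card {pt \<in> PG2_sub (subF q). card {lin \<in> tangent_lines a b c d e. incident pt lin} = 2}"

definition cubicS :: "'k::field \<Rightarrow> 'k \<Rightarrow> 'k \<Rightarrow> 'k \<Rightarrow> 'k \<Rightarrow> 'k \<Rightarrow> 'k \<Rightarrow> 'k \<Rightarrow> 'k
                       \<Rightarrow> 'k \<times> 'k \<times> 'k \<times> 'k \<Rightarrow> 'k" where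
  "cubicS w b1 d1 b2 d2 cA cB cC cD v = (case v of (t1, t2, x, z) \<Rightarrow>
     2 * t1 * t2 * (b1 * x + d1 * z) - (t1^2 + w * t2^2) * (b2 * x + d2 * z)
     + cA * x^3 + cB * x^2 * z + cC * x * z^2 + cD * z^3)"

definition cubicS_grad :: "'k::field \<Rightarrow> 'k \<Rightarrow> 'k \<Rightarrow> 'k \<Rightarrow> 'k \<Rightarrow> 'k \<Rightarrow> 'k \<Rightarrow> 'k \<Rightarrow> 'k
                       \<Rightarrow> 'k \<times> 'k \<times> 'k \<times> 'k \<Rightarrow> 'k \<times> 'k \<times> 'k \<times> 'k" where
  "cubicS_grad w b1 d1 b2 d2 cA cB cC cD v = (case v of (t1, t2, x, z) \<Rightarrow>
     (2 * t2 * (b1 * x + d1 * z) - 2 * t1 * (b2 * x + d2 * z),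
      2 * t1 * (b1 * x + d1 * z) - 2 * w * t2 * (b2 * x + d2 * z),
      2 * t1 * t2 * b1 - (t1^2 + w * t2^2) * b2 + 3 * cA * x^2 + 2 * cB * x * z + cC * z^2,
      2 * t1 * t2 * d1 - (t1^2 + w * t2^2) * d2 + cB * x^2 + 2 * cC * x * z + 3 * cD * z^2))"

definition cubicS_nonsingular :: "'b::field \<Rightarrow> 'b \<Rightarrow> 'b \<Rightarrow> 'b \<Rightarrow> 'b \<Rightarrow> 'b \<Rightarrow> 'b \<Rightarrow> 'b \<Rightarrow> 'b \<Rightarrow> bool" where
  "cubicS_nonsingular w b1 d1 b2 d2 cA cB cC cD \<longleftrightarrow>
     (\<forall>v :: 'b alg_closure \<times> 'b alg_closure \<times> 'b alg_closure \<times> 'b alg_closure.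
        v \<noteq> (0, 0, 0, 0) \<longrightarrow>
        \<not> (cubicS (to_ac w) (to_ac b1) (to_ac d1) (to_ac b2) (to_ac d2)
                  (to_ac cA) (to_ac cB) (to_ac cC) (to_ac cD) v = 0 \<and>
           cubicS_grad (to_ac w) (to_ac b1) (to_ac d1) (to_ac b2) (to_ac d2)
                  (to_ac cA) (to_ac cB) (to_ac cC) (to_ac cD) v = (0, 0, 0, 0)))"

definition n0_points :: "'b::field set \<Rightarrow> 'b \<Rightarrow> 'b \<Rightarrow> 'b \<Rightarrow> 'b \<Rightarrow> 'b \<Rightarrow> 'b \<Rightarrow> 'b \<Rightarrow> 'b \<Rightarrow> 'b
                        \<Rightarrow> ('b \<times> 'b \<times> 'b \<times> 'b) set set" where
  "n0_points K w b1 d1 b2 d2 cA cB cC cD =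
     {pclass4 K (0, 0, x, z) | x z. x \<in> K \<and> z \<in> K \<and> (x, z) \<noteq> (0, 0) \<and>
        cubicS w b1 d1 b2 d2 cA cB cC cD (0, 0, x, z) = 0}"

end

theory Submission
  imports Defs "HOL-Number_Theory.Residues" "HOL-Computational_Algebra.Polynomial"
begin

lemma fiber_card_sum:
  assumes "finite A"
  shows "card A = (\<Sum>y\<in>f ` A. card {x\<in>A. f x = y})"
proof -
  have "A = (\<Union>y\<in>f ` A. {x\<in>A. f x = y})" by auto
  hence "card A = card (\<Union>y\<in>f ` A. {x\<in>A. f x = y})" by simp
  also have "\<dots> = (\<Sum>y\<in>f ` A. card {x\<in>A. f x = y})"
    by (rule card_UN_disjoint) (use assms in auto)
  finally show ?thesis .
qed

lemma field_pow_card: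
  fixes x :: "'b::{finite,field}"
  shows "x ^ card (UNIV :: 'b set) = x"
proof (cases "x = 0")
  case False
  have "x * (\<Prod>y\<in>UNIV-{0}. x * y) = x * x ^ (card (UNIV :: 'b set) - 1) * \<Prod>(UNIV-{0})"
    by (simp add: prod.distrib mult_ac)
  also have "x * x ^ (card (UNIV :: 'b set) - 1) = x ^ Suc (card (UNIV :: 'b set) - 1)"
    by (subst power_Suc) auto
  also have "Suc (card (UNIV :: 'b set) - 1) = card (UNIV :: 'b set)"
    using finite_UNIV_card_ge_0[where ?'a = 'b] by simp
  also have "(\<Prod>y\<in>UNIV-{0}. x * y) = (\<Prod>y\<in>UNIV-{0}. y)"
    by (rule prod.reindex_bij_witness[of _ "\<lambda>y. y / x" "\<lambda>y. x * y"]) (use False in auto)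
  finally show ?thesis
    by simp
qed (use finite_UNIV_card_ge_0[where ?'a = 'b] in auto)

lemma card_roots_le:
  fixes a c :: "'b::field"
  assumes "n > 1"
  shows "card {x. x ^ n = a * x + c} \<le> n"
proof -
  let ?p = "monom (1::'b) n + [:- c, - a:]"
  have d2: "degree [:- c, - a:] < n" using assms by (simp add: degree_pCons_eq_if)
  have deg: "degree ?p = n" using assms d2 by (subst degree_add_eq_left) (simp_all add: degree_monom_eq)
  hence "?p \<noteq> 0" using assms by auto
  hence "card {x. poly ?p x = 0} \<le> degree ?p" by (rule card_poly_roots_bound)
  moreover have "{x. poly ?p x = 0} = {x. x ^ n = a * x + c}"
    by (auto simp: poly_monom algebra_simps eq_neg_iff_add_eq_0)
  ultimately show ?thesis using deg by simp
qed

locale ffs =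
  fixes q :: nat and \<epsilon> \<omega> :: "'b::{finite,field}"
  assumes q_pp: "\<exists>p k. prime p \<and> k > 0 \<and> q = p ^ k"
    and q_odd: "odd q"
    and card: "card (UNIV :: 'b set) = q ^ 2"
    and \<omega>_in: "\<omega> \<in> subF q"
    and \<omega>_nonsq: "\<not> (\<exists>s \<in> subF q. s ^ 2 = \<omega>)"
    and \<epsilon>_sq: "\<epsilon> ^ 2 = \<omega>"
begin

lemma q_pos: "q > 0" using q_odd by (cases q) auto

lemma frob_add: "((x::'b) + y) ^ q = x ^ q + y ^ q"
proof -
  obtain p k where pk: "prime p" "k > 0" "q = p ^ k" using q_pp by blast
  have fin: "finite (UNIV :: 'b set)" by simp
  have pc: "prime CHAR('b)" by (rule prime_CHAR_semidom[OF finite_imp_CHAR_pos[OF fin]])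
  have "CHAR('b) dvd card (UNIV :: 'b set)" by (rule CHAR_dvd_CARD)
  hence "CHAR('b) dvd p ^ (2 * k)" using card pk by (simp add: power_mult mult.commute)
  hence "CHAR('b) dvd p" using pc prime_dvd_power by blast
  hence "CHAR('b) = p" using pc pk primes_dvd_imp_eq by blast
  thus ?thesis using freshmans_dream'[OF pc, of q k] pk by simp
qed

lemma frob_minus: "(- (x::'b)) ^ q = - (x ^ q)"
  using q_odd by (simp add: power_minus_odd)

lemma frob_diff: "((x::'b) - y) ^ q = x ^ q - y ^ q"
  using frob_add[of x "-y"] frob_minus[of y] by simp

lemma subF_0: "(0::'b) \<in> subF q" using q_pos by (simp add: subF_def)
lemma subF_1: "(1::'b) \<in> subF q" by (simp add: subF_def)
lemma subF_add: "(x::'b) \<in> subF q \<Longrightarrow> y \<in> subF q \<Longrightarrow> x + y \<in> subF q"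
  by (simp add: subF_def frob_add)
lemma subF_diff: "(x::'b) \<in> subF q \<Longrightarrow> y \<in> subF q \<Longrightarrow> x - y \<in> subF q"
  by (simp add: subF_def frob_diff)
lemma subF_uminus: "(x::'b) \<in> subF q \<Longrightarrow> - x \<in> subF q"
  by (simp add: subF_def frob_minus)
lemma subF_mult: "(x::'b) \<in> subF q \<Longrightarrow> y \<in> subF q \<Longrightarrow> x * y \<in> subF q"
  by (simp add: subF_def power_mult_distrib)
lemma subF_inverse: "(x::'b) \<in> subF q \<Longrightarrow> inverse x \<in> subF q"
  by (simp add: subF_def power_inverse)
lemma subF_divide: "(x::'b) \<in> subF q \<Longrightarrow> y \<in> subF q \<Longrightarrow> x / y \<in> subF q"
  by (simp add: subF_def power_divide)
lemma subF_power: "(x::'b) \<in> subF q \<Longrightarrow> x ^ n \<in> subF q"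
  by (induction n) (auto simp: subF_1 subF_mult)
lemma subF_of_nat: "(of_nat m :: 'b) \<in> subF q"
  by (induction m) (auto simp: subF_0 subF_1 subF_add)
lemma subF_numeral: "(numeral n :: 'b) \<in> subF q"
  using subF_of_nat[of "numeral n"] by simp

lemmas subF_closed = subF_0 subF_1 subF_add subF_diff subF_uminus subF_mult subF_divide subF_power subF_numeral

lemma card_subF: "card (subF q :: 'b set) = q"
proof -
  let ?K = "subF q :: 'b set"
  have q1: "q > 1"
  proof -
    obtain p k where pk: "prime p" "k > 0" "q = p ^ k" using q_pp by blast
    have "p > 1" using pk(1) prime_gt_1_nat by blast
    thus ?thesis using pk by (metis one_less_power)
  qed
  have le: "card ?K \<le> q" unfolding subF_def using card_roots_le[OF q1, of 1 0] by simp
  define \<phi> where "\<phi> = (\<lambda>x::'b. x ^ q - x)"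
  have img: "\<phi> ` UNIV \<subseteq> {y. y ^ q = - y}"
  proof
    fix y assume "y \<in> \<phi> ` UNIV"
    then obtain x where y: "y = x ^ q - x" by (auto simp: \<phi>_def)
    have "x ^ (q * q) = x" using field_pow_card[of x] card by (simp add: power2_eq_square)
    hence "(x ^ q) ^ q = x" by (simp add: power_mult)
    thus "y \<in> {y. y ^ q = - y}" using y by (simp add: frob_diff)
  qed
  have le2: "card (\<phi> ` UNIV) \<le> q"
  proof -
    have "card {y::'b. y ^ q = - 1 * y + 0} \<le> q" by (rule card_roots_le[OF q1])
    moreover have "\<phi> ` UNIV \<subseteq> {y::'b. y ^ q = - 1 * y + 0}" using img by auto
    ultimately show ?thesis using card_mono[of "{y::'b. y ^ q = - 1 * y + 0}" "\<phi> ` UNIV"] by simp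
  qed
  have fib: "card {x\<in>UNIV. \<phi> x = y} = card ?K" if hy: "y \<in> \<phi> ` UNIV" for y
  proof -
    obtain x0 where x0: "\<phi> x0 = y" using hy by blast
    have "{x\<in>UNIV. \<phi> x = y} = (\<lambda>k. k + x0) ` ?K"
    proof (intro equalityI subsetI)
      fix x assume "x \<in> {x\<in>UNIV. \<phi> x = y}"
      hence "\<phi> x = \<phi> x0" using x0 by simp
      hence "(x - x0) ^ q = x - x0" by (simp add: \<phi>_def frob_diff algebra_simps)
      hence "x - x0 \<in> ?K" by (simp add: subF_def)
      thus "x \<in> (\<lambda>k. k + x0) ` ?K" by (auto intro!: image_eqI[of _ _ "x - x0"])
    next
      fix x assume "x \<in> (\<lambda>k. k + x0) ` ?K"
      then obtain k where "k \<in> ?K" "x = k + x0" by auto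
      thus "x \<in> {x\<in>UNIV. \<phi> x = y}" using x0 by (simp add: \<phi>_def subF_def frob_add)
    qed
    thus ?thesis by (simp add: card_image inj_on_def)
  qed
  have "q ^ 2 = card (UNIV :: 'b set)" using card by simp
  also have "\<dots> = (\<Sum>y\<in>\<phi> ` UNIV. card {x\<in>UNIV. \<phi> x = y})" by (rule fiber_card_sum) simp
  also have "\<dots> = card (\<phi> ` UNIV) * card ?K" using fib by simp
  finally have eq: "q ^ 2 = card (\<phi> ` UNIV) * card ?K" .
  show ?thesis
  proof (rule ccontr)
    assume "card ?K \<noteq> q"
    hence "card ?K < q" using le by simp
    have "card (\<phi> ` UNIV) * card ?K \<le> q * card ?K" using le2 by (rule mult_le_mono1)
    also have "\<dots> < q * q" using \<open>card ?K < q\<close> q_pos by simp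
    finally have "card (\<phi> ` UNIV) * card ?K < q * q" .
    thus False using eq by (simp add: power2_eq_square)
  qed
qed



lemma two_nz: "(2::'b) \<noteq> 0"
proof
  assume "(2::'b) = 0"
  hence "(of_nat 2 :: 'b) = 0" by simp
  hence d2: "CHAR('b) dvd 2" by (simp only: of_nat_eq_0_iff_char_dvd)
  have "CHAR('b) dvd q ^ 2" using CHAR_dvd_CARD[where 'a='b] card by simp
  moreover have "odd (q ^ 2)" using q_odd by simp
  ultimately have "odd (CHAR('b))" using dvd_trans by blast
  moreover have "CHAR('b) \<le> 2" using dvd_imp_le[OF d2] by simp
  moreover have "CHAR('b) \<noteq> 0" using finite_imp_CHAR_pos[of] by (metis finite_UNIV less_not_refl)
  moreover have "CHAR('b) \<noteq> 1" by simp
  ultimately show False by (cases "CHAR('b)") (auto simp: le_Suc_eq)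
qed

lemma neg_ne: "(x::'b) \<noteq> 0 \<Longrightarrow> x \<noteq> - x"
  using two_nz by (metis add_eq_0_iff2 mult_2 mult_eq_0_iff)

lemma sq_eq_iff: "((x::'b) ^ 2 = y ^ 2) \<longleftrightarrow> (x = y \<or> x = - y)"
  by (metis power2_eq_iff)

lemma card_squares:
  assumes A: "\<And>x. x \<in> A \<Longrightarrow> - x \<in> A" "(0::'b) \<notin> A"
  shows "2 * card ((\<lambda>x. x ^ 2) ` A) = card A"
proof -
  have fin: "finite A" by simp
  have fib: "card {x\<in>A. x ^ 2 = y} = 2" if "y \<in> (\<lambda>x. x ^ 2) ` A" for y
  proof -
    from that obtain x where x: "x \<in> A" "y = x ^ 2" by blast
    have "{x'\<in>A. x' ^ 2 = y} = {x, - x}" using x A by (auto simp: sq_eq_iff)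
    moreover have "x \<noteq> - x" using x A neg_ne by metis
    ultimately show ?thesis by simp
  qed
  have "card A = (\<Sum>y\<in>(\<lambda>x. x ^ 2) ` A. card {x\<in>A. x ^ 2 = y})" by (rule fiber_card_sum[OF fin])
  also have "\<dots> = (\<Sum>y\<in>(\<lambda>x. x ^ 2) ` A. 2)" using fib by (intro sum.cong) auto
  finally show ?thesis by simp
qed

lemma eps_notin: "\<epsilon> \<notin> subF q"
  using \<omega>_nonsq \<epsilon>_sq by blast

lemma decomp_zero:
  assumes "u \<in> subF q" "v \<in> subF q" "u + \<epsilon> * v = 0"
  shows "u = 0 \<and> v = 0"
proof (cases "v = 0")
  case True thus ?thesis using assms by simp
next
  case False
  have "\<epsilon> * v = - u" using assms(3) by (simp add: eq_neg_iff_add_eq_0 add.commute)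
  hence "\<epsilon> = - u / v" using False by (simp add: field_simps)
  hence "\<epsilon> \<in> subF q" using assms subF_closed by simp
  thus ?thesis using eps_notin by simp
qed

lemma decomp_unique:
  assumes "u \<in> subF q" "v \<in> subF q" "u' \<in> subF q" "v' \<in> subF q" "u + \<epsilon> * v = u' + \<epsilon> * v'"
  shows "u = u' \<and> v = v'"
proof -
  have "(u - u') + \<epsilon> * (v - v') = 0" using assms(5) by (simp add: algebra_simps)
  thus ?thesis using decomp_zero[of "u - u'" "v - v'"] assms subF_diff by simp
qed

lemma decomp_exists: "\<exists>u v. u \<in> subF q \<and> v \<in> subF q \<and> (z::'b) = u + \<epsilon> * v"
proof -
  let ?K = "subF q :: 'b set"
  let ?f = "\<lambda>(u,v). u + \<epsilon> * v"
  have inj: "inj_on ?f (?K \<times> ?K)"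
  proof (rule inj_onI)
    fix x y assume "x \<in> ?K \<times> ?K" "y \<in> ?K \<times> ?K" "?f x = ?f y"
    thus "x = y" using decomp_unique[of "fst x" "snd x" "fst y" "snd y"] by (cases x, cases y) auto
  qed
  have "card (?f ` (?K \<times> ?K)) = q ^ 2"
    using card_image[OF inj] card_subF by (simp add: card_cartesian_product power2_eq_square)
  hence "?f ` (?K \<times> ?K) = UNIV" using card by (intro card_subset_eq) simp_all
  hence "z \<in> ?f ` (?K \<times> ?K)" by simp
  thus ?thesis by auto
qed

lemma comp1_eq: "u \<in> subF q \<Longrightarrow> v \<in> subF q \<Longrightarrow> comp1 (subF q) \<epsilon> (u + \<epsilon> * v) = u"
  unfolding comp1_def by (rule the_equality) (use decomp_unique in blast)+

lemma comp2_eq: "u \<in> subF q \<Longrightarrow> v \<in> subF q \<Longrightarrow> comp2 (subF q) \<epsilon> (u + \<epsilon> * v) = v"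
  unfolding comp2_def by (rule the_equality) (use decomp_unique in blast)+

lemma subF_sq:
  assumes "k \<in> subF q" "k \<noteq> 0"
  shows "\<exists>t. t ^ 2 = (k::'b)"
proof -
  let ?K = "subF q - {0} :: 'b set"
  let ?S = "(\<lambda>x. x ^ 2) ` ?K"
  let ?T = "(\<lambda>x. \<omega> * x) ` ?S"
  have cK: "card ?K = q - 1" using card_subF subF_0 by simp
  have cS: "2 * card ?S = q - 1"
    using card_squares[of ?K] cK subF_uminus by auto
  have \<omega>nz: "\<omega> \<noteq> 0" using \<omega>_nonsq subF_0 by auto
  have cT: "card ?T = card ?S" using \<omega>nz by (intro card_image) (auto simp: inj_on_def)
  have disj: "?S \<inter> ?T = {}"
  proof (rule ccontr)
    assume "?S \<inter> ?T \<noteq> {}"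
    then obtain x y where xy: "x \<in> ?K" "y \<in> ?K" "x ^ 2 = \<omega> * y ^ 2" by auto
    hence "(x / y) ^ 2 = \<omega>" by (simp add: power_divide)
    moreover have "x / y \<in> subF q" using xy subF_divide by auto
    ultimately show False using \<omega>_nonsq by blast
  qed
  have sub: "?S \<union> ?T \<subseteq> ?K" using \<omega>_in \<omega>nz by (auto intro: subF_mult subF_power)
  have "card (?S \<union> ?T) = q - 1" using card_Un_disjoint[OF _ _ disj] cT cS by simp
  hence "?S \<union> ?T = ?K" using sub cK by (metis card_subset_eq finite_Diff finite)
  hence "k \<in> ?S \<union> ?T" using assms by simp
  then obtain x where "k = x ^ 2 \<or> k = \<omega> * x ^ 2" by auto
  thus ?thesis
  proof
    assume "k = x ^ 2" thus ?thesis by blast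
  next
    assume "k = \<omega> * x ^ 2" hence "k = (\<epsilon> * x) ^ 2" using \<epsilon>_sq by (simp add: power_mult_distrib)
    thus ?thesis by blast
  qed
qed


end

context ffs begin

lemma sq_scale:
  assumes "k \<in> subF q" "k \<noteq> 0"
  shows "(\<exists>t. t ^ 2 = k * (z::'b)) \<longleftrightarrow> (\<exists>t. t ^ 2 = z)"
proof -
  obtain s where s: "s ^ 2 = k" using subF_sq[OF assms] by blast
  have snz: "s \<noteq> 0" using s assms by auto
  show ?thesis
  proof
    assume "\<exists>t. t ^ 2 = k * z"
    then obtain t where "t ^ 2 = k * z" by blast
    hence "(t / s) ^ 2 = z" using s snz assms(2) by (simp add: power_divide)
    thus "\<exists>t. t ^ 2 = z" by blast
  next
    assume "\<exists>t. t ^ 2 = z"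
    then obtain t where "t ^ 2 = z" by blast
    hence "(s * t) ^ 2 = k * z" using s by (simp add: power_mult_distrib)
    thus "\<exists>t. t ^ 2 = k * z" by blast
  qed
qed

lemma card_sqF: "2 * card {z::'b. z \<noteq> 0 \<and> (\<exists>t. t ^ 2 = z)} = q ^ 2 - 1"
proof -
  have "(\<lambda>x. x ^ 2) ` (UNIV - {0::'b}) = {z::'b. z \<noteq> 0 \<and> (\<exists>t. t ^ 2 = z)}" by auto
  moreover have "card (UNIV - {0::'b}) = q ^ 2 - 1" using card by (simp add: card_Diff_singleton)
  ultimately show ?thesis using card_squares[of "UNIV - {0::'b}"] by auto
qed

lemma indep:
  assumes K: "L1 \<in> subF q" "L2 \<in> subF q" "R1 \<in> subF q" "R2 \<in> subF q" "\<mu> \<in> subF q" "\<nu> \<in> subF q"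
    and G: "L2 * R1 - L1 * R2 \<noteq> 0"
    and eq: "\<mu> * (L1 + \<epsilon> * L2) + \<nu> * (R1 + \<epsilon> * R2) = 0"
  shows "\<mu> = 0 \<and> \<nu> = 0"
proof -
  have "(\<mu> * L1 + \<nu> * R1) + \<epsilon> * (\<mu> * L2 + \<nu> * R2) = 0" using eq by (simp add: algebra_simps)
  moreover have "\<mu> * L1 + \<nu> * R1 \<in> subF q" "\<mu> * L2 + \<nu> * R2 \<in> subF q"
    using K by (simp_all add: subF_add subF_mult)
  ultimately have z: "\<mu> * L1 + \<nu> * R1 = 0" "\<mu> * L2 + \<nu> * R2 = 0"
    using decomp_zero by blast+
  have "\<mu> * (L2 * R1 - L1 * R2) = R1 * (\<mu> * L2 + \<nu> * R2) - R2 * (\<mu> * L1 + \<nu> * R1)" by (simp add: algebra_simps)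
  hence m: "\<mu> = 0" using z G by simp
  have "\<nu> * (L2 * R1 - L1 * R2) = L2 * (\<mu> * L1 + \<nu> * R1) - L1 * (\<mu> * L2 + \<nu> * R2)" by (simp add: algebra_simps)
  hence "\<nu> = 0" using z G by simp
  with m show ?thesis by simp
qed

lemma line_count:
  fixes L1 L2 R1 R2 L R :: 'b
  assumes K: "L1 \<in> subF q" "L2 \<in> subF q" "R1 \<in> subF q" "R2 \<in> subF q"
    and G: "L2 * R1 - L1 * R2 \<noteq> 0"
    and L: "L = L1 + \<epsilon> * L2" and R: "R = R1 + \<epsilon> * R2"
  shows "2 * card {y \<in> subF q. y * L + R \<noteq> 0 \<and> (\<exists>t. t ^ 2 = y * L + R)}
           + 2 * (if (\<exists>t. t ^ 2 = L) then 1 else 0) = q + 1"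
proof -
  let ?K = "subF q :: 'b set"
  let ?Ks = "?K - {0}"
  let ?Y = "{y \<in> ?K. y * L + R \<noteq> 0 \<and> (\<exists>t. t ^ 2 = y * L + R)}"
  let ?Sq = "{z::'b. z \<noteq> 0 \<and> (\<exists>t. t ^ 2 = z)}"
  let ?D = "(\<lambda>l. l * L) ` ?Ks"
  let ?T = "?Sq - ?D"
  define \<Phi> where "\<Phi> = (\<lambda>(l, y). l * (y * L + R))"
  have ind: "\<mu> = 0 \<and> \<nu> = 0" if "\<mu> \<in> ?K" "\<nu> \<in> ?K" "\<mu> * L + \<nu> * R = 0" for \<mu> \<nu>
    using indep[OF K _ _ G, of \<mu> \<nu>] that L R by simp
  have Lnz: "L \<noteq> 0" using ind[of 1 0] subF_1 subF_0 by auto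
  have inj: "inj_on \<Phi> (?Ks \<times> ?Y)"
  proof (rule inj_onI)
    fix a b assume a: "a \<in> ?Ks \<times> ?Y" and b: "b \<in> ?Ks \<times> ?Y" and e: "\<Phi> a = \<Phi> b"
    obtain l y where ly: "a = (l, y)" by (cases a)
    obtain l' y' where ly': "b = (l', y')" by (cases b)
    have mem: "l \<in> ?K" "y \<in> ?K" "l' \<in> ?K" "y' \<in> ?K" "l \<noteq> 0" using a b ly ly' by auto
    have "(l * y - l' * y') * L + (l - l') * R = 0" using e ly ly'
      by (simp add: \<Phi>_def algebra_simps)
    hence "l * y - l' * y' = 0 \<and> l - l' = 0" using mem by (intro ind) (auto intro: subF_closed)
    hence "l = l'" "y = y'" using mem by auto
    thus "a = b" using ly ly' by simp
  qed
  have img: "\<Phi> ` (?Ks \<times> ?Y) = ?T"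
  proof (intro equalityI subsetI)
    fix w assume "w \<in> \<Phi> ` (?Ks \<times> ?Y)"
    then obtain l y where mem: "l \<in> ?K" "l \<noteq> 0" "y \<in> ?K" "y * L + R \<noteq> 0" "\<exists>t. t ^ 2 = y * L + R"
      and w: "w = l * (y * L + R)" by (auto simp: \<Phi>_def)
    have "w \<noteq> 0" using mem w by simp
    moreover have "\<exists>t. t ^ 2 = w" using sq_scale[of l "y * L + R"] mem w by simp
    moreover have "w \<notin> ?D"
    proof
      assume "w \<in> ?D"
      then obtain l' where "l' \<in> ?K" "w = l' * L" by auto
      hence "(l * y - l') * L + l * R = 0" using w by (simp add: algebra_simps)
      hence "l = 0" using ind[of "l * y - l'" l] mem \<open>l' \<in> ?K\<close> by (auto intro: subF_closed)
      thus False using mem by simp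
    qed
    ultimately show "w \<in> ?T" by simp
  next
    fix w assume wT: "w \<in> ?T"
    obtain w1 w2 where ww: "w1 \<in> ?K" "w2 \<in> ?K" "w = w1 + \<epsilon> * w2" using decomp_exists by blast
    define g where "g = L2 * R1 - L1 * R2"
    define \<nu> where "\<nu> = (L2 * w1 - L1 * w2) / g"
    define \<mu> where "\<mu> = (w2 * R1 - w1 * R2) / g"
    have gK: "g \<in> ?K" using K by (simp add: g_def subF_closed)
    have nK: "\<nu> \<in> ?K" "\<mu> \<in> ?K" using K ww gK by (simp_all add: \<nu>_def \<mu>_def subF_closed)
    have gnz: "g \<noteq> 0" using G g_def by simp
    have "\<mu> * L + \<nu> * R = (\<mu> * L1 + \<nu> * R1) + \<epsilon> * (\<mu> * L2 + \<nu> * R2)" using L R by (simp add: algebra_simps)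
    also have "\<mu> * L1 + \<nu> * R1 = ((w2 * R1 - w1 * R2) * L1 + (L2 * w1 - L1 * w2) * R1) / g"
      by (simp add: \<mu>_def \<nu>_def add_divide_distrib)
    also have "(w2 * R1 - w1 * R2) * L1 + (L2 * w1 - L1 * w2) * R1 = w1 * g"
      by (simp add: g_def algebra_simps)
    also have "\<mu> * L2 + \<nu> * R2 = ((w2 * R1 - w1 * R2) * L2 + (L2 * w1 - L1 * w2) * R2) / g"
      by (simp add: \<mu>_def \<nu>_def add_divide_distrib)
    also have "(w2 * R1 - w1 * R2) * L2 + (L2 * w1 - L1 * w2) * R2 = w2 * g"
      by (simp add: g_def algebra_simps)
    finally have wr: "w = \<mu> * L + \<nu> * R" using ww gnz by simp
    have nnz: "\<nu> \<noteq> 0"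
    proof
      assume "\<nu> = 0"
      hence "w = \<mu> * L" using wr by simp
      moreover have "\<mu> \<noteq> 0" using wT \<open>w = \<mu> * L\<close> by auto
      ultimately have "w \<in> ?D" using nK by auto
      thus False using wT by simp
    qed
    define y where "y = \<mu> / \<nu>"
    have yK: "y \<in> ?K" using nK by (simp add: y_def subF_closed)
    have wy: "w = \<nu> * (y * L + R)" using wr nnz by (simp add: y_def field_simps)
    have "y * L + R \<noteq> 0" using wy wT by auto
    moreover have "\<exists>t. t ^ 2 = y * L + R" using sq_scale[of \<nu> "y * L + R"] nK nnz wy wT by auto
    ultimately have "(\<nu>, y) \<in> ?Ks \<times> ?Y" using nK nnz yK by simp
    moreover have "\<Phi> (\<nu>, y) = w" using wy by (simp add: \<Phi>_def)
    ultimately show "w \<in> \<Phi> ` (?Ks \<times> ?Y)" by force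
  qed
  have cKs: "card ?Ks = q - 1" using card_subF subF_0 by simp
  have c1: "card ?T = (q - 1) * card ?Y"
    using card_image[OF inj] img cKs by (simp add: card_cartesian_product)
  have cD: "card ?D = q - 1" using Lnz cKs by (subst card_image) (auto simp: inj_on_def)
  have c2: "card ?T + (if (\<exists>t. t ^ 2 = L) then q - 1 else 0) = card ?Sq"
  proof (cases "\<exists>t. t ^ 2 = L")
    case True
    have "?D \<subseteq> ?Sq" using True Lnz sq_scale by auto
    hence "card ?T = card ?Sq - card ?D" by (intro card_Diff_subset) auto
    moreover have "card ?D \<le> card ?Sq" using \<open>?D \<subseteq> ?Sq\<close> by (intro card_mono) auto
    ultimately show ?thesis using True cD by simp
  next
    case False
    have "?D \<inter> ?Sq = {}" using False Lnz sq_scale by auto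
    hence "?T = ?Sq" by auto
    thus ?thesis using False by simp
  qed
  have q1: "q \<ge> 1" using q_pos by simp
  obtain m where qm: "q = Suc m" using q_pos by (cases q) auto
  define N where "N = card ?Y"
  define bb where "bb = (if (\<exists>t. t ^ 2 = L) then 1 else (0::nat))"
  have e1: "(if (\<exists>t. t ^ 2 = L) then q - 1 else 0) = bb * m" using qm by (simp add: bb_def)
  have "2 * (m * N) + 2 * (bb * m) = Suc m * Suc m - 1"
    using c1 c2 card_sqF qm e1 by (simp add: N_def power2_eq_square)
  hence "m * (2 * N + 2 * bb) = m * (m + 2)" by (simp add: algebra_simps)
  moreover have "m \<noteq> 0"
  proof
    assume "m = 0" hence "q = 1" using qm by simp
    moreover have "card {0, 1::'b} \<le> card (subF q :: 'b set)"
      using subF_0 subF_1 by (intro card_mono) auto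
    ultimately show False using card_subF by simp
  qed
  ultimately have "2 * N + 2 * bb = m + 2" using mult_left_cancel by blast
  thus ?thesis using qm by (simp add: N_def bb_def)
qed

lemma root_count:
  fixes r L R :: 'b
  assumes r: "r \<in> subF q" and Lnz: "L \<noteq> 0" and R: "R = r * L"
  shows "card {y \<in> subF q. y * L + R \<noteq> 0 \<and> (\<exists>t. t ^ 2 = y * L + R)}
           = (if (\<exists>t. t ^ 2 = L) then q - 1 else 0)"
proof -
  have eq: "y * L + R = (y + r) * L" for y using R by (simp add: algebra_simps)
  show ?thesis
  proof (cases "\<exists>t. t ^ 2 = L")
    case True
    have "{y \<in> subF q. y * L + R \<noteq> 0 \<and> (\<exists>t. t ^ 2 = y * L + R)} = subF q - {- r}"
    proof (intro equalityI subsetI)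
      fix y assume "y \<in> {y \<in> subF q. y * L + R \<noteq> 0 \<and> (\<exists>t. t ^ 2 = y * L + R)}"
      hence "y \<in> subF q" "(y + r) * L \<noteq> 0" using eq[of y] by auto
      hence "y \<noteq> - r" by (metis add.right_inverse add.commute mult_eq_0_iff)
      thus "y \<in> subF q - {- r}" using \<open>y \<in> subF q\<close> by simp
    next
      fix y assume y: "y \<in> subF q - {- r}"
      have yr: "y + r \<noteq> 0"
      proof
        assume "y + r = 0" hence "y = - r" by (simp add: eq_neg_iff_add_eq_0)
        thus False using y by simp
      qed
      have yrK: "y + r \<in> subF q" using r y by (simp add: subF_add)
      have "\<exists>t. t ^ 2 = (y + r) * L" using sq_scale[OF yrK yr, of L] True by simp
      moreover have "(y + r) * L \<noteq> 0" using yr Lnz by simp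
      ultimately show "y \<in> {y \<in> subF q. y * L + R \<noteq> 0 \<and> (\<exists>t. t ^ 2 = y * L + R)}"
        using y eq[of y] by simp
    qed
    moreover have "card (subF q - {- r} :: 'b set) = q - 1"
      using card_subF r subF_uminus by (simp add: card_Diff_singleton)
    ultimately show ?thesis using True by simp
  next
    case False
    have "{y \<in> subF q. y * L + R \<noteq> 0 \<and> (\<exists>t. t ^ 2 = y * L + R)} = {}"
    proof (intro equalityI subsetI)
      fix y assume "y \<in> {y \<in> subF q. y * L + R \<noteq> 0 \<and> (\<exists>t. t ^ 2 = y * L + R)}"
      hence h: "y \<in> subF q" "(y + r) * L \<noteq> 0" "\<exists>t. t ^ 2 = (y + r) * L" using eq[of y] by auto
      have "y + r \<noteq> 0" using h(2) by auto
      moreover have "y + r \<in> subF q" using r h(1) by (simp add: subF_add)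
      ultimately show "y \<in> {}" using sq_scale[of "y + r" L] False h(3) by blast
    qed auto
    thus ?thesis using False by simp
  qed
qed

end


definition phiC :: "'b::field \<Rightarrow> 'b \<Rightarrow> 'b \<Rightarrow> 'b \<Rightarrow> 'b \<times> 'b \<Rightarrow> 'b \<times> 'b \<times> 'b" where
  "phiC a b c e u = (fst u * (b * fst u + snd u), - (a * fst u ^ 2 + c * fst u * snd u + e * snd u ^ 2),
                     snd u * (b * fst u + snd u))"

definition dot3 :: "'b::field \<times> 'b \<times> 'b \<Rightarrow> 'b \<times> 'b \<times> 'b \<Rightarrow> 'b" where
  "dot3 u v = fst u * fst v + fst (snd u) * fst (snd v) + snd (snd u) * snd (snd v)"

definition sm3 :: "'b::field \<Rightarrow> 'b \<times> 'b \<times> 'b \<Rightarrow> 'b \<times> 'b \<times> 'b" where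
  "sm3 l v = (l * fst v, l * fst (snd v), l * snd (snd v))"

lemma pclass3_mem: "v \<in> pclass3 UNIV v"
  unfolding pclass3_def by (rule CollectI, rule exI[of _ 1]) simp

lemma pclass3_eqD:
  assumes "pclass3 UNIV v = pclass3 UNIV (w::'b::field \<times> 'b \<times> 'b)"
  shows "\<exists>l. l \<noteq> 0 \<and> v = sm3 l w"
  using pclass3_mem[of v] assms unfolding pclass3_def sm3_def by auto

lemma pclass3_sm:
  assumes "l \<noteq> 0"
  shows "pclass3 UNIV (sm3 l w) = pclass3 UNIV (w::'b::field \<times> 'b \<times> 'b)"
proof (intro equalityI subsetI)
  fix x assume "x \<in> pclass3 UNIV (sm3 l w)"
  then obtain m where "m \<noteq> 0" "x = (m * (l * fst w), m * (l * fst (snd w)), m * (l * snd (snd w)))"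
    unfolding pclass3_def sm3_def by auto
  thus "x \<in> pclass3 UNIV w" unfolding pclass3_def using assms
    by (auto intro!: exI[of _ "m * l"] simp: mult.assoc)
next
  fix x assume "x \<in> pclass3 UNIV w"
  then obtain m where "m \<noteq> 0" "x = (m * fst w, m * fst (snd w), m * snd (snd w))"
    unfolding pclass3_def by auto
  thus "x \<in> pclass3 UNIV (sm3 l w)" unfolding pclass3_def sm3_def using assms
    by (auto intro!: exI[of _ "m / l"])
qed

lemma pclass3_memD: "x \<in> pclass3 UNIV v \<Longrightarrow> \<exists>l. l \<noteq> 0 \<and> x = sm3 l v"
  unfolding pclass3_def sm3_def by blast

lemma dot3_sm: "dot3 (sm3 m n) (sm3 l p) = (m * l) * dot3 n p"
  by (simp add: dot3_def sm3_def algebra_simps)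

lemma incident_iff: "incident (pclass3 UNIV p) (pclass3 UNIV n) \<longleftrightarrow> dot3 n (p::'b::field \<times> 'b \<times> 'b) = 0"
proof
  assume "incident (pclass3 UNIV p) (pclass3 UNIV n)"
  then obtain v u where vu: "v \<in> pclass3 UNIV p" "u \<in> pclass3 UNIV n" "dot3 u v = 0"
    unfolding incident_def dot3_def by blast
  obtain l where l: "l \<noteq> 0" "v = sm3 l p" using pclass3_memD[OF vu(1)] by blast
  obtain m where m: "m \<noteq> 0" "u = sm3 m n" using pclass3_memD[OF vu(2)] by blast
  have "(m * l) * dot3 n p = 0" using vu(3) l m dot3_sm by metis
  thus "dot3 n p = 0" using l m by simp
next
  assume "dot3 n p = 0"
  thus "incident (pclass3 UNIV p) (pclass3 UNIV n)"
    unfolding incident_def dot3_def using pclass3_mem[of p] pclass3_mem[of n] by blast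
qed

lemma grad_sm: "conicGrad a b c d e (sm3 l v) = sm3 l (conicGrad a b c d e v)"
proof -
  obtain x y z where v: "v = (x, y, z)" by (cases v) auto
  show ?thesis unfolding v by (simp add: conicGrad_def sm3_def distrib_left mult.left_commute)
qed

lemma grad_inj:
  assumes ns: "conic_nonsingular a b c d e"
    and eq: "conicGrad a b c d e v = sm3 l (conicGrad a b c d e w)"
  shows "v = sm3 l w"
proof -
  obtain x y z where v: "v = (x, y, z)" by (cases v) auto
  obtain x' y' z' where w: "w = (x', y', z')" by (cases w) auto
  let ?u = "(x - l * x', y - l * y', z - l * z')"
  have e: "2 * a * x + b * y + c * z = l * (2 * a * x' + b * y' + c * z')"
    "b * x + d * z = l * (b * x' + d * z')"
    "c * x + d * y + 2 * e * z = l * (c * x' + d * y' + 2 * e * z')"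
    using eq unfolding v w by (simp_all add: conicGrad_def sm3_def)
  have "2 * a * (x - l * x') + b * (y - l * y') + c * (z - l * z')
      = (2 * a * x + b * y + c * z) - l * (2 * a * x' + b * y' + c * z')" by (simp add: algebra_simps)
  moreover have "b * (x - l * x') + d * (z - l * z') = (b * x + d * z) - l * (b * x' + d * z')"
    by (simp add: algebra_simps)
  moreover have "c * (x - l * x') + d * (y - l * y') + 2 * e * (z - l * z')
      = (c * x + d * y + 2 * e * z) - l * (c * x' + d * y' + 2 * e * z')" by (simp add: algebra_simps)
  ultimately have "conicGrad a b c d e ?u = (0, 0, 0)"
    using e by (simp add: conicGrad_def)
  hence "?u = (0, 0, 0)" using ns unfolding conic_nonsingular_def by (metis (no_types))
  thus ?thesis unfolding v w by (simp add: sm3_def)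
qed

lemma Q_phi: "conicF a b c 1 e (phiC a b c e u) = 0"
  by (cases u) (simp add: conicF_def phiC_def algebra_simps power2_eq_square)

lemma phi_sm: "phiC a b c e (l * fst u, l * snd u) = sm3 (l ^ 2) (phiC a b c e u)"
  by (cases u) (simp add: phiC_def sm3_def algebra_simps power2_eq_square)

lemma phi_nz:
  assumes D: "- b * c * 1 + a * 1 ^ 2 + b ^ 2 * e \<noteq> 0" and u: "u \<noteq> (0, 0)"
  shows "phiC a b c e u \<noteq> (0, 0, 0)"
proof
  assume z: "phiC a b c e u = (0, 0, 0)"
  obtain s t where st: "u = (s, t)" by (cases u)
  show False
  proof (cases "b * s + t = 0")
    case True
    hence t: "t = - b * s" by (simp add: eq_neg_iff_add_eq_0 add.commute)
    have "- (a * s ^ 2 + c * s * t + e * t ^ 2) = 0" using z st unfolding phiC_def by simp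
    hence "a * s ^ 2 + c * s * t + e * t ^ 2 = 0" by (simp only: neg_equal_0_iff_equal)
    hence "s ^ 2 * (- b * c * 1 + a * 1 ^ 2 + b ^ 2 * e) = 0" using t by (simp add: algebra_simps power2_eq_square)
    hence "s = 0" using D by simp
    thus False using t st u by simp
  next
    case False
    thus False using z st u by (simp add: phiC_def)
  qed
qed

lemma phi_surj:
  assumes D: "- b * c * 1 + a * 1 ^ 2 + b ^ 2 * e \<noteq> 0"
    and v: "v \<noteq> (0, 0, 0)" "conicF a b c 1 e v = 0"
  shows "\<exists>u l. u \<noteq> (0, 0) \<and> l \<noteq> 0 \<and> v = sm3 l (phiC a b c e u)"
proof -
  obtain x y z where xyz: "v = (x, y, z)" by (cases v)
  show ?thesis
  proof (cases "b * x + z = 0")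
    case True
    hence z: "z = - b * x" by (simp add: eq_neg_iff_add_eq_0 add.commute)
    have "x ^ 2 * (- b * c * 1 + a * 1 ^ 2 + b ^ 2 * e) = 0" using v(2) xyz z
      by (simp add: conicF_def algebra_simps power2_eq_square)
    hence x: "x = 0" using D by simp
    hence y: "y \<noteq> 0" using v xyz z by simp
    define dd where "dd = - b * c * 1 + a * 1 ^ 2 + b ^ 2 * e"
    have ddnz: "dd \<noteq> 0" using D by (simp add: dd_def)
    have "phiC a b c e (1, - b) = (0, - dd, 0)" by (simp add: phiC_def dd_def algebra_simps power2_eq_square)
    hence "v = sm3 (- y / dd) (phiC a b c e (1, - b))" using xyz x z ddnz by (simp add: sm3_def)
    thus ?thesis using y D by (intro exI[of _ "(1, - b)"] exI[of _ "- y / dd"]) (simp add: dd_def)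
  next
    case False
    have "conicF a b c 1 e v = y * (b * x + z) + (a * x ^ 2 + c * x * z + e * z ^ 2)"
      using xyz by (simp add: conicF_def algebra_simps power2_eq_square)
    hence "y * (b * x + z) = - (a * x ^ 2 + c * x * z + e * z ^ 2)"
      using v(2) by (simp only: eq_neg_iff_add_eq_0)
    hence "phiC a b c e (x, z) = sm3 (b * x + z) v" using xyz
      by (simp add: phiC_def sm3_def mult.commute)
    hence "v = sm3 (1 / (b * x + z)) (phiC a b c e (x, z))" using False xyz by (simp add: sm3_def)
    moreover have "(x, z) \<noteq> (0, 0)" using False by auto
    ultimately show ?thesis using False by (intro exI[of _ "(x, z)"] exI[of _ "1 / (b * x + z)"]) simp
  qed
qed

lemma phi_inj:
  assumes u: "u \<noteq> (0, 0)" and u': "u' \<noteq> (0, 0)" and l: "l \<noteq> 0"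
    and eq: "phiC a b c e u = sm3 l (phiC a b c e u')"
  shows "\<exists>m. u = (m * fst u', m * snd u')"
proof -
  obtain s t where st: "u = (s, t)" by (cases u)
  obtain s' t' where st': "u' = (s', t')" by (cases u')
  define L where "L = b * s + t"
  define L' where "L' = b * s' + t'"
  have e1: "s * L = l * (s' * L')" and e3: "t * L = l * (t' * L')"
    using eq st st' by (simp_all add: phiC_def sm3_def L_def L'_def)
  show ?thesis
  proof (cases "L = 0")
    case False
    have "s = (l * L' / L) * s'" "t = (l * L' / L) * t'" using e1 e3 False by (simp_all add: field_simps)
    thus ?thesis using st st' by (intro exI[of _ "l * L' / L"]) simp
  next
    case True
    have "s' * L' = 0" "t' * L' = 0" using e1 e3 True l by simp_all
    hence L'0: "L' = 0" using u' st' by auto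
    have t: "t = - b * s" using True by (simp add: L_def eq_neg_iff_add_eq_0 add.commute)
    have t': "t' = - b * s'" using L'0 by (simp add: L'_def eq_neg_iff_add_eq_0 add.commute)
    have "s' \<noteq> 0" using u' st' t' by auto
    hence "s = (s / s') * s'" "t = (s / s') * t'" using t t' by simp_all
    thus ?thesis using st st' by (intro exI[of _ "s / s'"]) simp
  qed
qed


lemma binq_key: "4 * al * (al * s ^ 2 + be * s * t + ga * t ^ 2) = (2 * al * s + be * t) ^ 2 - (be ^ 2 - 4 * al * ga) * t ^ 2"
  for al be ga s t :: "'b::field"
  by (simp add: algebra_simps power2_eq_square)

lemma binq_card:
  fixes al be ga :: "'b::field" and h :: "'b \<times> 'b \<Rightarrow> 'x"
  assumes two: "(2::'b) \<noteq> 0"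
    and nz: "\<not> (al = 0 \<and> be = 0 \<and> ga = 0)"
    and hinj: "\<And>u v. u \<noteq> (0, 0) \<Longrightarrow> v \<noteq> (0, 0) \<Longrightarrow> h u = h v \<Longrightarrow> \<exists>m. u = (m * fst v, m * snd v)"
    and hres: "\<And>u m. m \<noteq> 0 \<Longrightarrow> h (m * fst u, m * snd u) = h u"
  shows "card (h ` {u. u \<noteq> (0, 0) \<and> al * fst u ^ 2 + be * fst u * snd u + ga * snd u ^ 2 = 0}) = 2
         \<longleftrightarrow> (be ^ 2 - 4 * al * ga \<noteq> 0 \<and> (\<exists>d. d ^ 2 = be ^ 2 - 4 * al * ga))"
    (is "card (h ` ?S) = 2 \<longleftrightarrow> ?R")
proof -
  have four: "(4::'b) \<noteq> 0" using two by (metis mult_eq_0_iff num_double numeral_times_numeral)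
  have hprop: "h u = h r" if "u \<in> ?S" "u = (m * fst r, m * snd r)" for u r m
  proof -
    have "m \<noteq> 0" using that by auto
    thus ?thesis using hres[of m r] that by simp
  qed
  show ?thesis
  proof
    assume c2: "card (h ` ?S) = 2"
    show ?R
    proof (rule ccontr)
      assume nR: "\<not> ?R"
      have "\<exists>r0. \<forall>u\<in>?S. \<exists>m. u = (m * fst r0, m * snd r0)"
      proof (cases "al = 0")
        case True
        have "be ^ 2 - 4 * al * ga = be ^ 2" using True by simp
        hence "be = 0" using nR by auto
        hence "ga \<noteq> 0" using nz True by simp
        have "\<forall>u\<in>?S. \<exists>m. u = (m * fst (1::'b, 0::'b), m * snd (1::'b, 0::'b))"
        proof
          fix u assume "u \<in> ?S"
          hence "ga * snd u ^ 2 = 0" using True \<open>be = 0\<close> by simp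
          hence "snd u = 0" using \<open>ga \<noteq> 0\<close> by simp
          thus "\<exists>m. u = (m * fst (1::'b, 0::'b), m * snd (1::'b, 0::'b))" by (intro exI[of _ "fst u"]) (cases u, simp)
        qed
        thus ?thesis by blast
      next
        case False
        have "\<forall>u\<in>?S. \<exists>m. u = (m * fst (- be, 2 * al), m * snd (- be, 2 * al))"
        proof
          fix u assume uS: "u \<in> ?S"
          obtain s t where st: "u = (s, t)" by (cases u)
          have f0: "al * s ^ 2 + be * s * t + ga * t ^ 2 = 0" using uS st by simp
          hence k: "(2 * al * s + be * t) ^ 2 = (be ^ 2 - 4 * al * ga) * t ^ 2" using binq_key[of al s be t ga] by simp
          have tnz: "t \<noteq> 0"
          proof
            assume "t = 0"
            hence "(2 * al * s) ^ 2 = 0" using k by simp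
            hence "s = 0" using False two by simp
            thus False using uS st \<open>t = 0\<close> by simp
          qed
          have "((2 * al * s + be * t) / t) ^ 2 = be ^ 2 - 4 * al * ga" using k tnz by (simp add: power_divide)
          hence "be ^ 2 - 4 * al * ga = 0" using nR by blast
          hence "2 * al * s + be * t = 0" using k by simp
          hence "s = (t / (2 * al)) * (- be)" "t = (t / (2 * al)) * (2 * al)" using False two
            by (simp_all add: field_simps eq_neg_iff_add_eq_0)
          thus "\<exists>m. u = (m * fst (- be, 2 * al), m * snd (- be, 2 * al))" using st by (intro exI[of _ "t / (2 * al)"]) simp
        qed
        thus ?thesis by blast
      qed
      then obtain r0 where r0: "\<forall>u\<in>?S. \<exists>m. u = (m * fst r0, m * snd r0)" by blast
      have "h ` ?S \<subseteq> {h r0}" using r0 hprop by blast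
      hence "card (h ` ?S) \<le> 1" using card_mono[of "{h r0}" "h ` ?S"] by simp
      thus False using c2 by simp
    qed
  next
    assume R: ?R
    then obtain d where d1: "d ^ 2 = be ^ 2 - 4 * al * ga" by blast
    have "d \<noteq> 0" using d1 R by auto
    note d = d1 this
    have "\<exists>r1 r2. r1 \<in> ?S \<and> r2 \<in> ?S \<and> \<not> (\<exists>m. r1 = (m * fst r2, m * snd r2)) \<and>
           (\<forall>u\<in>?S. (\<exists>m. u = (m * fst r1, m * snd r1)) \<or> (\<exists>m. u = (m * fst r2, m * snd r2)))"
    proof (cases "al = 0")
      case True
      hence "be \<noteq> 0" using d by auto
      have S1: "(1, 0) \<in> ?S" using True by simp
      have S2: "(- ga, be) \<in> ?S" using True \<open>be \<noteq> 0\<close> by (simp add: power2_eq_square)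
      have np: "\<not> (\<exists>m. (1::'b, 0::'b) = (m * fst (- ga, be), m * snd (- ga, be)))" using \<open>be \<noteq> 0\<close> by auto
      have all: "\<forall>u\<in>?S. (\<exists>m. u = (m * fst (1::'b, 0::'b), m * snd (1::'b, 0::'b))) \<or> (\<exists>m. u = (m * fst (- ga, be), m * snd (- ga, be)))"
      proof
        fix u assume uS: "u \<in> ?S"
        obtain s t where st: "u = (s, t)" by (cases u)
        have "t * (be * s + ga * t) = 0" using uS st True by (simp add: algebra_simps power2_eq_square)
        hence "t = 0 \<or> be * s + ga * t = 0" by simp
        thus "(\<exists>m. u = (m * fst (1::'b, 0::'b), m * snd (1::'b, 0::'b))) \<or> (\<exists>m. u = (m * fst (- ga, be), m * snd (- ga, be)))"
        proof
          assume "t = 0" thus ?thesis using st by auto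
        next
          assume "be * s + ga * t = 0"
          hence e: "s = (t / be) * (- ga)" "t = (t / be) * be" using \<open>be \<noteq> 0\<close>
            by (simp_all add: field_simps eq_neg_iff_add_eq_0)
          have "u = ((t / be) * fst (- ga, be), (t / be) * snd (- ga, be))" using st e by simp
          thus ?thesis by blast
        qed
      qed
      show ?thesis using S1 S2 np all by blast
    next
      case False
      let ?r1 = "(d - be, 2 * al)" and ?r2 = "(- d - be, 2 * al)"
      have r1: "?r1 \<in> ?S"
      proof -
        have "4 * al * (al * (d - be) ^ 2 + be * (d - be) * (2 * al) + ga * (2 * al) ^ 2)
            = (2 * al * (d - be) + be * (2 * al)) ^ 2 - (be ^ 2 - 4 * al * ga) * (2 * al) ^ 2" by (rule binq_key)
        also have "\<dots> = (2 * al * d) ^ 2 - d ^ 2 * (2 * al) ^ 2"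
          by (subst d(1)[symmetric]) (simp add: algebra_simps)
        also have "\<dots> = 0" by (simp add: power_mult_distrib)
        finally have "4 * al * (al * (d - be) ^ 2 + be * (d - be) * (2 * al) + ga * (2 * al) ^ 2) = 0" .
        thus ?thesis using False two four by simp
      qed
      have r2: "?r2 \<in> ?S"
      proof -
        have "4 * al * (al * (- d - be) ^ 2 + be * (- d - be) * (2 * al) + ga * (2 * al) ^ 2)
            = (2 * al * (- d - be) + be * (2 * al)) ^ 2 - (be ^ 2 - 4 * al * ga) * (2 * al) ^ 2" by (rule binq_key)
        also have "\<dots> = (2 * al * (- d)) ^ 2 - d ^ 2 * (2 * al) ^ 2"
          by (subst d(1)[symmetric]) (simp add: algebra_simps)
        also have "\<dots> = 0" by (simp add: power_mult_distrib)
        finally have "4 * al * (al * (- d - be) ^ 2 + be * (- d - be) * (2 * al) + ga * (2 * al) ^ 2) = 0" .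
        thus ?thesis using False two four by simp
      qed
      have np: "\<not> (\<exists>m. ?r1 = (m * fst ?r2, m * snd ?r2))"
      proof
        assume "\<exists>m. ?r1 = (m * fst ?r2, m * snd ?r2)"
        then obtain m where m: "d - be = m * (- d - be)" "2 * al = m * (2 * al)" by auto
        hence "m = 1" using False two by simp
        hence "2 * d = 0" using m by (simp add: algebra_simps)
        thus False using d two by simp
      qed
      have all: "\<forall>u\<in>?S. (\<exists>m. u = (m * fst ?r1, m * snd ?r1)) \<or> (\<exists>m. u = (m * fst ?r2, m * snd ?r2))"
      proof
        fix u assume uS: "u \<in> ?S"
        obtain s t where st: "u = (s, t)" by (cases u)
        have f0: "al * s ^ 2 + be * s * t + ga * t ^ 2 = 0" using uS st by simp
        hence k: "(2 * al * s + be * t) ^ 2 = (d * t) ^ 2" using binq_key[of al s be t ga] d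
          by (simp add: power_mult_distrib)
        hence "2 * al * s + be * t = d * t \<or> 2 * al * s + be * t = - (d * t)" by (simp add: power2_eq_iff)
        thus "(\<exists>m. u = (m * fst ?r1, m * snd ?r1)) \<or> (\<exists>m. u = (m * fst ?r2, m * snd ?r2))"
        proof
          assume "2 * al * s + be * t = d * t"
          hence "s = (t / (2 * al)) * (d - be)" using False two
            by (simp add: field_simps, (simp add: algebra_simps)?)
          moreover have "t = (t / (2 * al)) * (2 * al)" using False two by simp
          ultimately have "s = (t / (2 * al)) * (d - be)" "t = (t / (2 * al)) * (2 * al)" by blast+
          hence "u = ((t / (2 * al)) * fst ?r1, (t / (2 * al)) * snd ?r1)" using st by simp
          thus ?thesis by blast
        next
          assume "2 * al * s + be * t = - (d * t)"
          hence "s = (t / (2 * al)) * (- d - be)" using False two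
            by (simp add: field_simps, (simp add: algebra_simps)?)
          moreover have "t = (t / (2 * al)) * (2 * al)" using False two by simp
          ultimately have "s = (t / (2 * al)) * (- d - be)" "t = (t / (2 * al)) * (2 * al)" by blast+
          hence "u = ((t / (2 * al)) * fst ?r2, (t / (2 * al)) * snd ?r2)" using st by simp
          thus ?thesis by blast
        qed
      qed
      show ?thesis using r1 r2 np all by blast
    qed
    then obtain r1 r2 where rr: "r1 \<in> ?S" "r2 \<in> ?S" "\<not> (\<exists>m. r1 = (m * fst r2, m * snd r2))"
      "\<forall>u\<in>?S. (\<exists>m. u = (m * fst r1, m * snd r1)) \<or> (\<exists>m. u = (m * fst r2, m * snd r2))" by blast
    have "h ` ?S = {h r1, h r2}"
    proof (intro equalityI subsetI)
      fix x assume "x \<in> h ` ?S"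
      then obtain u where u: "u \<in> ?S" "x = h u" by blast
      from rr(4) u(1) have "(\<exists>m. u = (m * fst r1, m * snd r1)) \<or> (\<exists>m. u = (m * fst r2, m * snd r2))" by blast
      thus "x \<in> {h r1, h r2}" using hprop[OF u(1)] u(2) by blast
    next
      fix x assume "x \<in> {h r1, h r2}"
      thus "x \<in> h ` ?S" using rr(1,2) by blast
    qed
    moreover have "h r1 \<noteq> h r2"
    proof
      assume "h r1 = h r2"
      hence "\<exists>m. r1 = (m * fst r2, m * snd r2)" using hinj rr(1,2) by blast
      thus False using rr(3) by blast
    qed
    ultimately show "card (h ` ?S) = 2" by simp
  qed
qed


lemma dot_grad_phi:
  "dot3 (conicGrad a b c 1 e (phiC a b c e (s, t))) p =
     (b * fst (conicGrad a b c 1 e p) - a * fst (snd (conicGrad a b c 1 e p))) * s ^ 2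
     + (fst (conicGrad a b c 1 e p) - c * fst (snd (conicGrad a b c 1 e p)) + b * snd (snd (conicGrad a b c 1 e p))) * s * t
     + (snd (snd (conicGrad a b c 1 e p)) - e * fst (snd (conicGrad a b c 1 e p))) * t ^ 2"
proof -
  obtain x y z where p: "p = (x, y, z)" by (cases p) auto
  show ?thesis unfolding p by (simp add: conicGrad_def phiC_def dot3_def algebra_simps power2_eq_square)
qed

lemma disc_ident:
  fixes a b c e :: "'b::field"
  shows "(fst (conicGrad a b c 1 e p) - c * fst (snd (conicGrad a b c 1 e p)) + b * snd (snd (conicGrad a b c 1 e p))) ^ 2
     - 4 * (b * fst (conicGrad a b c 1 e p) - a * fst (snd (conicGrad a b c 1 e p)))
         * (snd (snd (conicGrad a b c 1 e p)) - e * fst (snd (conicGrad a b c 1 e p)))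
     = 4 * (- b * c * 1 + a * 1 ^ 2 + b ^ 2 * e) * conicF a b c 1 e p"
proof -
  obtain x y z where p: "p = (x, y, z)" by (cases p) auto
  show ?thesis unfolding p by (simp add: conicGrad_def conicF_def algebra_simps power2_eq_square)
qed

lemma sq_scale_gen:
  fixes r z :: "'b::field"
  assumes "r \<noteq> 0"
  shows "(\<exists>t. t ^ 2 = r ^ 2 * z) \<longleftrightarrow> (\<exists>t. t ^ 2 = z)"
proof
  assume "\<exists>t. t ^ 2 = r ^ 2 * z"
  then obtain t where "t ^ 2 = r ^ 2 * z" by blast
  hence "(t / r) ^ 2 = z" using assms by (simp add: power_divide)
  thus "\<exists>t. t ^ 2 = z" by blast
next
  assume "\<exists>t. t ^ 2 = z"
  then obtain t where "t ^ 2 = z" by blast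
  hence "(r * t) ^ 2 = r ^ 2 * z" by (simp add: power_mult_distrib)
  thus "\<exists>t. t ^ 2 = r ^ 2 * z" by blast
qed

lemma tangent_count:
  fixes a b c e :: "'b::field" and p :: "'b \<times> 'b \<times> 'b"
  assumes two: "(2::'b) \<noteq> 0" and ns: "conic_nonsingular a b c 1 e"
    and D: "- b * c * 1 + a * 1 ^ 2 + b ^ 2 * e \<noteq> 0"
    and Dsq: "\<exists>s. s ^ 2 = - b * c * 1 + a * 1 ^ 2 + b ^ 2 * e"
    and p: "p \<noteq> (0, 0, 0)"
  shows "card {lin \<in> tangent_lines a b c 1 e. incident (pclass3 UNIV p) lin} = 2
         \<longleftrightarrow> (conicF a b c 1 e p \<noteq> 0 \<and> (\<exists>t. t ^ 2 = conicF a b c 1 e p))"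
proof -
  define n1 where "n1 = fst (conicGrad a b c 1 e p)"
  define n2 where "n2 = fst (snd (conicGrad a b c 1 e p))"
  define n3 where "n3 = snd (snd (conicGrad a b c 1 e p))"
  define al where "al = b * n1 - a * n2"
  define be where "be = n1 - c * n2 + b * n3"
  define ga where "ga = n3 - e * n2"
  define h where "h = (\<lambda>u. pclass3 UNIV (conicGrad a b c 1 e (phiC a b c e u)))"
  let ?S = "{u. u \<noteq> (0, 0) \<and> al * fst u ^ 2 + be * fst u * snd u + ga * snd u ^ 2 = 0}"
  have dg: "dot3 (conicGrad a b c 1 e (phiC a b c e u)) p = al * fst u ^ 2 + be * fst u * snd u + ga * snd u ^ 2" for u
    using dot_grad_phi[of a b c e "fst u" "snd u" p] by (simp add: al_def be_def ga_def n1_def n2_def n3_def mult.assoc)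
  have hres: "h (m * fst u, m * snd u) = h u" if "m \<noteq> 0" for u m
    unfolding h_def phi_sm grad_sm using that by (simp add: pclass3_sm)
  have hinj: "\<exists>m. u = (m * fst v, m * snd v)" if hu: "u \<noteq> (0, 0)" and hv: "v \<noteq> (0, 0)" and he: "h u = h v" for u v
  proof -
    obtain l where l: "l \<noteq> 0" "conicGrad a b c 1 e (phiC a b c e u) = sm3 l (conicGrad a b c 1 e (phiC a b c e v))"
      using pclass3_eqD[OF he[unfolded h_def]] by blast
    have "phiC a b c e u = sm3 l (phiC a b c e v)" using grad_sm l(2) grad_inj[OF ns] by metis
    thus ?thesis using phi_inj[OF hu hv l(1)] by blast
  qed
  have nz: "\<not> (al = 0 \<and> be = 0 \<and> ga = 0)"
  proof
    assume z: "al = 0 \<and> be = 0 \<and> ga = 0"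
    hence n3: "n3 = e * n2" by (simp add: ga_def)
    hence n1: "n1 = c * n2 - b * (e * n2)" using z by (simp add: be_def algebra_simps eq_neg_iff_add_eq_0)
    have "b * n1 - a * n2 = - (- b * c * 1 + a * 1 ^ 2 + b ^ 2 * e) * n2" unfolding n1 by (simp add: algebra_simps power2_eq_square)
    hence "- (- b * c * 1 + a * 1 ^ 2 + b ^ 2 * e) * n2 = 0" using z by (simp add: al_def)
    hence "n2 = 0" using D by (simp only: mult_eq_0_iff neg_equal_0_iff_equal) blast
    hence "conicGrad a b c 1 e p = (0, 0, 0)" using n1 n3 by (simp add: n1_def n2_def n3_def prod_eq_iff)
    thus False using ns p unfolding conic_nonsingular_def by (metis (no_types))
  qed
  have setq: "{lin \<in> tangent_lines a b c 1 e. incident (pclass3 UNIV p) lin} = h ` ?S"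
  proof (intro equalityI subsetI)
    fix lin assume "lin \<in> {lin \<in> tangent_lines a b c 1 e. incident (pclass3 UNIV p) lin}"
    then obtain v where v: "v \<noteq> (0, 0, 0)" "conicF a b c 1 e v = 0" "lin = pclass3 UNIV (conicGrad a b c 1 e v)"
      and inc: "incident (pclass3 UNIV p) lin" unfolding tangent_lines_def by blast
    obtain u l where ul: "u \<noteq> (0, 0)" "l \<noteq> 0" "v = sm3 l (phiC a b c e u)" using phi_surj[OF D v(1,2)] by blast
    have lin: "lin = h u" using v(3) ul by (simp add: h_def grad_sm pclass3_sm)
    have "dot3 (conicGrad a b c 1 e (phiC a b c e u)) p = 0" using inc lin incident_iff by (metis h_def)
    hence "u \<in> ?S" using dg ul by simp
    thus "lin \<in> h ` ?S" using lin by blast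
  next
    fix lin assume "lin \<in> h ` ?S"
    then obtain u where u: "u \<in> ?S" "lin = h u" by blast
    have "lin \<in> tangent_lines a b c 1 e" unfolding tangent_lines_def h_def u(2)
      using phi_nz[OF D] Q_phi u(1) by blast
    moreover have "incident (pclass3 UNIV p) lin" unfolding u(2) h_def incident_iff using dg u(1) by simp
    ultimately show "lin \<in> {lin \<in> tangent_lines a b c 1 e. incident (pclass3 UNIV p) lin}" by blast
  qed
  have bq: "card (h ` ?S) = 2 \<longleftrightarrow> (be ^ 2 - 4 * al * ga \<noteq> 0 \<and> (\<exists>d. d ^ 2 = be ^ 2 - 4 * al * ga))"
    by (rule binq_card[OF two nz hinj hres]) blast+
  have disc: "be ^ 2 - 4 * al * ga = 4 * (- b * c * 1 + a * 1 ^ 2 + b ^ 2 * e) * conicF a b c 1 e p"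
    using disc_ident[of a b c e p] by (simp add: al_def be_def ga_def n1_def n2_def n3_def)
  obtain r where r: "r ^ 2 = - b * c * 1 + a * 1 ^ 2 + b ^ 2 * e" using Dsq by blast
  have "r \<noteq> 0" using r D by auto
  have four: "(4::'b) \<noteq> 0" using two by (metis mult_eq_0_iff num_double numeral_times_numeral)
  have r2: "2 * r \<noteq> 0" using two \<open>r \<noteq> 0\<close> by simp
  have k: "be ^ 2 - 4 * al * ga = (2 * r) ^ 2 * conicF a b c 1 e p"
    unfolding disc r[symmetric] by (simp add: power_mult_distrib)
  have "card (h ` ?S) = 2 \<longleftrightarrow> ((2 * r) ^ 2 * conicF a b c 1 e p \<noteq> 0 \<and> (\<exists>d. d ^ 2 = (2 * r) ^ 2 * conicF a b c 1 e p))"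
    using bq unfolding k .
  also have "\<dots> \<longleftrightarrow> (conicF a b c 1 e p \<noteq> 0 \<and> (\<exists>t. t ^ 2 = conicF a b c 1 e p))"
    using sq_scale_gen[OF r2, of "conicF a b c 1 e p"] r2 four by simp
  finally show ?thesis using setq by simp
qed



definition normP1 :: "'b::field set \<Rightarrow> ('b \<times> 'b) set" where
  "normP1 K = (\<lambda>z. (1, z)) ` K \<union> {(0, 1)}"

lemma image_filter: "{x \<in> f ` A. P x} = f ` {a \<in> A. P (f a)}" by auto

context ffs begin

lemma card_normP1: "card (normP1 (subF q) :: ('b \<times> 'b) set) = q + 1"
proof -
  have "card ((\<lambda>z. (1::'b, z)) ` (subF q :: 'b set)) = q" using card_subF by (subst card_image) (auto simp: inj_on_def)
  moreover have "(0::'b, 1::'b) \<notin> (\<lambda>z. (1, z)) ` subF q" by auto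
  ultimately show ?thesis unfolding normP1_def by simp
qed

lemma normP1_nz: "(u::'b \<times> 'b) \<in> normP1 (subF q) \<Longrightarrow> u \<noteq> (0, 0)"
  unfolding normP1_def by auto

lemma normP1_K: "(u::'b \<times> 'b) \<in> normP1 (subF q) \<Longrightarrow> fst u \<in> subF q \<and> snd u \<in> subF q"
  unfolding normP1_def using subF_0 subF_1 by auto

lemma count_Eq:
  fixes a b c e :: 'b
  assumes ns: "conic_nonsingular a b c 1 e"
    and D: "- b * c * 1 + a * 1 ^ 2 + b ^ 2 * e \<noteq> 0"
    and Dsq: "\<exists>s. s ^ 2 = - b * c * 1 + a * 1 ^ 2 + b ^ 2 * e"
  shows "Eq_conic q a b c 1 e = (\<Sum>u\<in>normP1 (subF q). card {y \<in> subF q.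
            conicF a b c 1 e (fst u, y, snd u) \<noteq> 0 \<and> (\<exists>t. t ^ 2 = conicF a b c 1 e (fst u, y, snd u))})"
proof -
  let ?K = "subF q :: 'b set"
  let ?N = "normP1 ?K"
  define good where "good = (\<lambda>v. conicF a b c 1 e v \<noteq> 0 \<and> (\<exists>t. t ^ 2 = conicF a b c 1 e v))"
  define \<rho> where "\<rho> = (\<lambda>(u::'b \<times> 'b, y::'b). (fst u, y, snd u))"
  let ?R = "\<rho> ` (?N \<times> ?K) \<union> {(0, 1, 0)}"
  have Rnz: "r \<noteq> (0, 0, 0)" if "r \<in> ?R" for r
    using that normP1_nz unfolding \<rho>_def by (auto simp: prod_eq_iff)
  have RK: "fst r \<in> ?K \<and> fst (snd r) \<in> ?K \<and> snd (snd r) \<in> ?K" if "r \<in> ?R" for r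
    using that normP1_K subF_0 subF_1 unfolding \<rho>_def by auto
  have Rinj: "r = r'" if h1: "r \<in> ?R" and h2: "r' \<in> ?R" and h3: "pclass3 UNIV r = pclass3 UNIV r'" for r r'
  proof -
    obtain l where l: "l \<noteq> 0" "r = sm3 l r'" using pclass3_eqD[OF h3] by blast
    show ?thesis using h1 h2 l unfolding \<rho>_def normP1_def sm3_def by auto
  qed
  have Rsurj: "\<exists>r\<in>?R. pclass3 UNIV p = pclass3 UNIV r"
    if hp: "p \<noteq> (0, 0, 0)" "fst p \<in> ?K" "fst (snd p) \<in> ?K" "snd (snd p) \<in> ?K" for p
  proof -
    obtain x y z where p: "p = (x, y, z)" by (cases p) auto
    have K: "x \<in> ?K" "y \<in> ?K" "z \<in> ?K" using hp p by auto
    show ?thesis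
    proof (cases "x = 0")
      case False
      have "p = sm3 x (1, y / x, z / x)" using False p by (simp add: sm3_def)
      moreover have "(1, y / x, z / x) \<in> ?R" unfolding \<rho>_def normP1_def using K
        by (auto intro!: image_eqI[of _ _ "((1, z / x), y / x)"] subF_divide)
      ultimately show ?thesis using False pclass3_sm by metis
    next
      case x0: True
      show ?thesis
      proof (cases "z = 0")
        case False
        have "p = sm3 z (0, y / z, 1)" using False x0 p by (simp add: sm3_def)
        moreover have "(0, y / z, 1) \<in> ?R" unfolding \<rho>_def normP1_def using K
          by (auto intro!: image_eqI[of _ _ "((0, 1), y / z)"] subF_divide)
        ultimately show ?thesis using False pclass3_sm by metis
      next
        case True
        hence "y \<noteq> 0" using x0 hp p by auto
        have "p = sm3 y (0, 1, 0)" using True x0 p by (simp add: sm3_def)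
        thus ?thesis using \<open>y \<noteq> 0\<close> pclass3_sm by (metis UnI2 singletonI)
      qed
    qed
  qed
  have PG: "PG2_sub ?K = (\<lambda>r. pclass3 UNIV r) ` ?R"
  proof (intro equalityI subsetI)
    fix pt assume "pt \<in> PG2_sub ?K"
    then obtain p where p: "pt = pclass3 UNIV p" "p \<noteq> (0, 0, 0)" "fst p \<in> ?K" "fst (snd p) \<in> ?K" "snd (snd p) \<in> ?K"
      unfolding PG2_sub_def by blast
    obtain r where "r \<in> ?R" "pclass3 UNIV p = pclass3 UNIV r" using Rsurj[OF p(2-5)] by blast
    thus "pt \<in> (\<lambda>r. pclass3 UNIV r) ` ?R" using p(1) by (intro image_eqI[of _ _ r]) simp_all
  next
    fix pt assume "pt \<in> (\<lambda>r. pclass3 UNIV r) ` ?R"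
    then obtain r where "r \<in> ?R" "pt = pclass3 UNIV r" by blast
    thus "pt \<in> PG2_sub ?K" unfolding PG2_sub_def using Rnz[of r] RK[of r]
      by (intro CollectI exI[of _ r]) simp
  qed
  have two: "(2::'b) \<noteq> 0" by (rule two_nz)
  have tc: "card {lin \<in> tangent_lines a b c 1 e. incident (pclass3 UNIV r) lin} = 2 \<longleftrightarrow> good r"
    if "r \<in> ?R" for r
    using tangent_count[OF two ns D Dsq Rnz[OF that]] by (simp add: good_def)
  have "{pt \<in> PG2_sub ?K. card {lin \<in> tangent_lines a b c 1 e. incident pt lin} = 2}
        = (\<lambda>r. pclass3 UNIV r) ` {r \<in> ?R. good r}"
  proof -
    have "{pt \<in> (\<lambda>r. pclass3 UNIV r) ` ?R. card {lin \<in> tangent_lines a b c 1 e. incident pt lin} = 2}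
       = (\<lambda>r. pclass3 UNIV r) ` {r \<in> ?R. card {lin \<in> tangent_lines a b c 1 e. incident (pclass3 UNIV r) lin} = 2}"
      by (rule image_filter)
    also have "{r \<in> ?R. card {lin \<in> tangent_lines a b c 1 e. incident (pclass3 UNIV r) lin} = 2} = {r \<in> ?R. good r}"
    proof (rule Collect_cong)
      fix r show "(r \<in> ?R \<and> card {lin \<in> tangent_lines a b c 1 e. incident (pclass3 UNIV r) lin} = 2) = (r \<in> ?R \<and> good r)"
        using tc[of r] by argo
    qed
    finally show ?thesis unfolding PG .
  qed
  moreover have "inj_on (\<lambda>r. pclass3 UNIV r) {r \<in> ?R. good r}"
    using Rinj unfolding inj_on_def by blast
  ultimately have E1: "Eq_conic q a b c 1 e = card {r \<in> ?R. good r}"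
    unfolding Eq_conic_def by (simp add: card_image)
  have g0: "\<not> good (0, 1, 0)" by (simp add: good_def conicF_def)
  have s1: "{r \<in> ?R. good r} = \<rho> ` {x \<in> ?N \<times> ?K. good (\<rho> x)}"
  proof (intro equalityI subsetI)
    fix r assume "r \<in> {r \<in> ?R. good r}"
    hence "r \<in> \<rho> ` (?N \<times> ?K)" "good r" using g0 by auto
    thus "r \<in> \<rho> ` {x \<in> ?N \<times> ?K. good (\<rho> x)}" by blast
  next
    fix r assume "r \<in> \<rho> ` {x \<in> ?N \<times> ?K. good (\<rho> x)}"
    thus "r \<in> {r \<in> ?R. good r}" by blast
  qed
  have inj: "inj_on \<rho> (?N \<times> ?K)" unfolding \<rho>_def inj_on_def by (simp add: prod_eq_iff)
  have E2: "card {r \<in> ?R. good r} = card {x \<in> ?N \<times> ?K. good (\<rho> x)}"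
    unfolding s1 by (rule card_image[OF inj_on_subset[OF inj]]) blast
  have "{x \<in> ?N \<times> ?K. good (\<rho> x)} = (SIGMA u:?N. {y \<in> ?K. good (fst u, y, snd u)})"
    unfolding \<rho>_def by (auto simp: Sigma_def)
  hence E3: "card {x \<in> ?N \<times> ?K. good (\<rho> x)} = (\<Sum>u\<in>?N. card {y \<in> ?K. good (fst u, y, snd u)})"
    by (simp add: card_SigmaI)
  show ?thesis using E1 E2 E3 by (simp add: good_def)
qed


lemma pclass4_00_eqD:
  assumes "pclass4 (subF q) (0, 0, x, z) = pclass4 (subF q) (0, 0, x', z')"
  shows "\<exists>l. l \<in> subF q \<and> l \<noteq> 0 \<and> x = l * x' \<and> z = l * (z'::'b)"
proof -
  have "(0, 0, x, z) \<in> pclass4 (subF q) (0, 0, x, z)"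
    unfolding pclass4_def using subF_1 by (intro CollectI exI[of _ 1]) simp
  hence "(0, 0, x, z) \<in> pclass4 (subF q) (0, 0, x', z')" using assms by simp
  thus ?thesis unfolding pclass4_def by auto
qed

lemma pclass4_00_sm:
  assumes "l \<in> subF q" "l \<noteq> 0"
  shows "pclass4 (subF q) (0, 0, l * x, l * z) = pclass4 (subF q) (0, 0, x, z::'b)"
proof (intro equalityI subsetI)
  fix v assume "v \<in> pclass4 (subF q) (0, 0, l * x, l * z)"
  then obtain m where m: "m \<in> subF q" "m \<noteq> 0" "v = (0, 0, m * (l * x), m * (l * z))"
    unfolding pclass4_def by auto
  thus "v \<in> pclass4 (subF q) (0, 0, x, z)" unfolding pclass4_def using assms
    by (intro CollectI exI[of _ "m * l"]) (simp add: subF_mult mult.assoc)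
next
  fix v assume "v \<in> pclass4 (subF q) (0, 0, x, z)"
  then obtain m where m: "m \<in> subF q" "m \<noteq> 0" "v = (0, 0, m * x, m * z)"
    unfolding pclass4_def by auto
  thus "v \<in> pclass4 (subF q) (0, 0, l * x, l * z)" unfolding pclass4_def using assms
    by (intro CollectI exI[of _ "m / l"]) (simp add: subF_divide)
qed

lemma count_n0:
  fixes w b1 d1 b2 d2 cA cB cC cD :: 'b
  shows "card (n0_points (subF q) w b1 d1 b2 d2 cA cB cC cD) =
    card {u \<in> normP1 (subF q). cA * fst u ^ 3 + cB * fst u ^ 2 * snd u + cC * fst u * snd u ^ 2 + cD * snd u ^ 3 = 0}"
proof -
  let ?K = "subF q :: 'b set"
  define G where "G = (\<lambda>x z. cA * x ^ 3 + cB * x ^ 2 * z + cC * x * z ^ 2 + cD * z ^ 3)"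
  let ?N0 = "{u \<in> normP1 ?K. G (fst u) (snd u) = 0}"
  define \<pi> where "\<pi> = (\<lambda>u. pclass4 ?K (0, 0, fst u, snd u))"
  have cub: "cubicS w b1 d1 b2 d2 cA cB cC cD (0, 0, x, z) = G x z" for x z
    by (simp add: cubicS_def G_def)
  have Ghom: "G (l * x) (l * z) = l ^ 3 * G x z" for l x z
    by (simp add: G_def algebra_simps power3_eq_cube power2_eq_square)
  have eqset: "n0_points ?K w b1 d1 b2 d2 cA cB cC cD = \<pi> ` ?N0"
  proof (intro equalityI subsetI)
    fix pt assume "pt \<in> n0_points ?K w b1 d1 b2 d2 cA cB cC cD"
    then obtain x z where xz: "pt = pclass4 ?K (0, 0, x, z)" "x \<in> ?K" "z \<in> ?K" "(x, z) \<noteq> (0, 0)" "G x z = 0"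
      unfolding n0_points_def cub by blast
    show "pt \<in> \<pi> ` ?N0"
    proof (cases "x = 0")
      case False
      have "G x z = x ^ 3 * G 1 (z / x)" using Ghom[of x 1 "z / x"] False by simp
      hence "G 1 (z / x) = 0" using xz False by simp
      moreover have "(1, z / x) \<in> normP1 ?K" unfolding normP1_def using xz subF_divide by auto
      moreover have "pt = \<pi> (1, z / x)" using xz False pclass4_00_sm[of x 1 "z / x"] by (simp add: \<pi>_def)
      ultimately show ?thesis by force
    next
      case True
      hence "z \<noteq> 0" using xz by simp
      have "G x z = z ^ 3 * G 0 1" using Ghom[of z 0 1] True by simp
      hence "G 0 1 = 0" using xz \<open>z \<noteq> 0\<close> by simp
      moreover have "(0, 1) \<in> normP1 ?K" unfolding normP1_def by simp
      moreover have "pt = \<pi> (0, 1)" using xz True \<open>z \<noteq> 0\<close> pclass4_00_sm[of z 0 1] by (simp add: \<pi>_def)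
      ultimately show ?thesis by force
    qed
  next
    fix pt assume "pt \<in> \<pi> ` ?N0"
    then obtain u where u: "u \<in> normP1 ?K" "G (fst u) (snd u) = 0" "pt = \<pi> u" by blast
    show "pt \<in> n0_points ?K w b1 d1 b2 d2 cA cB cC cD"
      unfolding n0_points_def cub using u normP1_K[OF u(1)] normP1_nz[OF u(1)]
      by (intro CollectI exI[of _ "fst u"] exI[of _ "snd u"]) (simp add: \<pi>_def prod_eq_iff)
  qed
  have inj: "inj_on \<pi> ?N0"
  proof (rule inj_onI)
    fix u v assume u: "u \<in> ?N0" and v: "v \<in> ?N0" and e: "\<pi> u = \<pi> v"
    obtain l where l: "l \<noteq> 0" "fst u = l * fst v" "snd u = l * snd v"
      using pclass4_00_eqD[OF e[unfolded \<pi>_def]] by blast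
    show "u = v" using u v l unfolding normP1_def by auto
  qed
  have "card (n0_points ?K w b1 d1 b2 d2 cA cB cC cD) = card ?N0" unfolding eqset using card_image[OF inj] .
  thus ?thesis by (simp add: G_def)
qed

lemma Delta_zero:
  fixes a1 a2 b1 b2 c1 c2 e1 e2 eps :: "'c::field"
  assumes "- e2 = 0" "- c2 + b2 * e1 - b1 * e2 = 0" "b2 * c1 - b1 * c2 - a2 = 0" "- a2 * b1 + a1 * b2 = 0"
  shows "b2 * (- (b1 + eps * b2) * (c1 + eps * c2) * 1 + (a1 + eps * a2) * 1 ^ 2 + (b1 + eps * b2) ^ 2 * (e1 + eps * e2)) = 0"
proof -
  have e2: "e2 = 0" using assms(1) by simp
  have c2: "c2 = b2 * e1" using assms(2) e2 by (simp add: algebra_simps)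
  have a2: "a2 = b2 * c1 - b1 * c2" using assms(3) by (simp add: algebra_simps)
  have a1: "a1 * b2 = a2 * b1" using assms(4) by (simp add: algebra_simps)
  have "b2 * (- (b1 + eps * b2) * (c1 + eps * c2) * 1 + (a1 + eps * a2) * 1 ^ 2 + (b1 + eps * b2) ^ 2 * (e1 + eps * e2))
      = a1 * b2 - b1 * b2 * c1 + b1 ^ 2 * b2 * e1" unfolding e2 c2 a2 by (simp add: algebra_simps power2_eq_square)
  also have "\<dots> = 0" unfolding a1 a2 c2 by (simp add: algebra_simps power2_eq_square)
  finally show ?thesis .
qed

lemma card_roots_poly3:
  fixes c0 c1 c2 c3 :: "'c::field"
  assumes "\<not> (c0 = 0 \<and> c1 = 0 \<and> c2 = 0 \<and> c3 = 0)"
  shows "card {z. c0 + c1 * z + c2 * z ^ 2 + c3 * z ^ 3 = 0} \<le> 3"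
proof -
  let ?p = "[:c0, c1, c2, c3:]"
  have "?p \<noteq> 0" using assms by auto
  hence "card {z. poly ?p z = 0} \<le> degree ?p" by (rule card_poly_roots_bound)
  moreover have "degree ?p \<le> 3" by (simp add: degree_pCons_le)
  moreover have "{z. poly ?p z = 0} = {z. c0 + c1 * z + c2 * z ^ 2 + c3 * z ^ 3 = 0}"
    by (simp add: algebra_simps power2_eq_square power3_eq_cube)
  ultimately show ?thesis by simp
qed

lemma main_count:
  fixes a b c e a1 a2 b1 b2 c1 c2 e1 e2 cA cB cC cD :: 'b
  assumes K: "a1 \<in> subF q" "a2 \<in> subF q" "b1 \<in> subF q" "b2 \<in> subF q"
             "c1 \<in> subF q" "c2 \<in> subF q" "e1 \<in> subF q" "e2 \<in> subF q"
    and ab: "a = a1 + \<epsilon> * a2" "b = b1 + \<epsilon> * b2" "c = c1 + \<epsilon> * c2" "e = e1 + \<epsilon> * e2"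
    and b2: "b2 \<noteq> 0"
    and ns: "conic_nonsingular a b c 1 e"
    and D: "- b * c * 1 + a * 1 ^ 2 + b ^ 2 * e \<noteq> 0"
    and Dsq: "\<exists>s. s ^ 2 = - b * c * 1 + a * 1 ^ 2 + b ^ 2 * e"
    and hA: "cA = - a2 * b1 + a1 * b2" and hB: "cB = b2 * c1 - b1 * c2 - a2"
    and hC: "cC = - c2 + b2 * e1 - b1 * e2" and hD: "cD = - e2"
  shows "\<exists>\<alpha>::int. let n0 = card (n0_points (subF q) \<omega> b1 1 b2 0 cA cB cC cD)
    in 2 * int (Eq_conic q a b c 1 e) = int q ^ 2 + (\<alpha> - 1) * int q - int n0
       \<and> ((n0 \<in> {0, 2} \<and> \<alpha> \<in> {-2, 0, 2, 4}) \<or> (n0 \<in> {1, 3} \<and> \<alpha> \<in> {-1, 1, 3, 5, 7}))"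
proof -
  let ?K = "subF q :: 'b set"
  let ?N = "normP1 ?K"
  define Gf where "Gf = (\<lambda>u::'b \<times> 'b. cA * fst u ^ 3 + cB * fst u ^ 2 * snd u + cC * fst u * snd u ^ 2 + cD * snd u ^ 3)"
  define sqL where "sqL = (\<lambda>u::'b \<times> 'b. \<exists>t. t ^ 2 = b * fst u + snd u)"
  define f where "f = (\<lambda>u::'b \<times> 'b. card {y \<in> ?K. conicF a b c 1 e (fst u, y, snd u) \<noteq> 0 \<and>
                              (\<exists>t. t ^ 2 = conicF a b c 1 e (fst u, y, snd u))})"
  define N0 where "N0 = {u \<in> ?N. Gf u = 0}"
  define n0 where "n0 = card N0"
  define s where "s = card {u \<in> N0. sqL u}"
  have finN: "finite ?N" by simp
  have N0sub: "N0 \<subseteq> ?N" by (auto simp: N0_def)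
  have n0_eq: "card (n0_points (subF q) \<omega> b1 1 b2 0 cA cB cC cD) = n0"
    unfolding n0_def N0_def Gf_def by (rule count_n0)
  have E: "Eq_conic q a b c 1 e = (\<Sum>u\<in>?N. f u)"
    unfolding f_def by (rule count_Eq[OF ns D Dsq])
  have line: "\<exists>L1 L2 R1 R2. L1 \<in> ?K \<and> L2 \<in> ?K \<and> R1 \<in> ?K \<and> R2 \<in> ?K \<and>
      b * fst u + snd u = L1 + \<epsilon> * L2 \<and> Gf u = L2 * R1 - L1 * R2 \<and> (L1 = 0 \<longrightarrow> L2 \<noteq> 0) \<and>
      (\<forall>y. conicF a b c 1 e (fst u, y, snd u) = y * (L1 + \<epsilon> * L2) + (R1 + \<epsilon> * R2))"
    if u: "u \<in> ?N" for u
  proof -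
    obtain x z where xz: "u = (x, z)" by (cases u)
    have xzK: "x \<in> ?K" "z \<in> ?K" using normP1_K[OF u] xz by auto
    define L1 where "L1 = b1 * x + z"
    define L2 where "L2 = b2 * x"
    define R1 where "R1 = a1 * x ^ 2 + c1 * x * z + e1 * z ^ 2"
    define R2 where "R2 = a2 * x ^ 2 + c2 * x * z + e2 * z ^ 2"
    have inK: "L1 \<in> ?K" "L2 \<in> ?K" "R1 \<in> ?K" "R2 \<in> ?K"
      using K xzK by (simp_all add: L1_def L2_def R1_def R2_def subF_closed)
    have e1: "b * fst u + snd u = L1 + \<epsilon> * L2" using ab xz by (simp add: L1_def L2_def algebra_simps)
    have e2: "Gf u = L2 * R1 - L1 * R2" unfolding Gf_def hA hB hC hD xz
      by (simp add: L1_def L2_def R1_def R2_def algebra_simps power2_eq_square power3_eq_cube)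
    have e3: "L1 = 0 \<longrightarrow> L2 \<noteq> 0"
    proof
      assume "L1 = 0"
      show "L2 \<noteq> 0"
      proof
        assume "L2 = 0" hence "x = 0" using b2 by (simp add: L2_def)
        hence "z = 0" using \<open>L1 = 0\<close> by (simp add: L1_def)
        thus False using \<open>x = 0\<close> normP1_nz[OF u] xz by simp
      qed
    qed
    have e4: "conicF a b c 1 e (fst u, y, snd u) = y * (L1 + \<epsilon> * L2) + (R1 + \<epsilon> * R2)" for y
      using ab xz by (simp add: conicF_def L1_def L2_def R1_def R2_def algebra_simps power2_eq_square)
    show ?thesis using inK e1 e2 e3 e4 by blast
  qed
  have fnr: "2 * f u + 2 * (if sqL u then 1 else 0) = q + 1" if u: "u \<in> ?N" "Gf u \<noteq> 0" for u
  proof -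
    obtain L1 L2 R1 R2 where l: "L1 \<in> ?K" "L2 \<in> ?K" "R1 \<in> ?K" "R2 \<in> ?K"
      "b * fst u + snd u = L1 + \<epsilon> * L2" "Gf u = L2 * R1 - L1 * R2"
      "\<forall>y. conicF a b c 1 e (fst u, y, snd u) = y * (L1 + \<epsilon> * L2) + (R1 + \<epsilon> * R2)"
      using line[OF u(1)] by blast
    have "2 * card {y \<in> ?K. y * (L1 + \<epsilon> * L2) + (R1 + \<epsilon> * R2) \<noteq> 0 \<and> (\<exists>t. t ^ 2 = y * (L1 + \<epsilon> * L2) + (R1 + \<epsilon> * R2))}
           + 2 * (if (\<exists>t. t ^ 2 = L1 + \<epsilon> * L2) then 1 else 0) = q + 1"
      using line_count[OF l(1-4) _ refl refl] u(2) l(6) by simp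
    thus ?thesis using l(5,7) by (simp add: f_def sqL_def)
  qed
  have fr: "f u = (if sqL u then q - 1 else 0)" if u: "u \<in> ?N" "Gf u = 0" for u
  proof -
    obtain L1 L2 R1 R2 where l: "L1 \<in> ?K" "L2 \<in> ?K" "R1 \<in> ?K" "R2 \<in> ?K"
      "b * fst u + snd u = L1 + \<epsilon> * L2" "Gf u = L2 * R1 - L1 * R2" "L1 = 0 \<longrightarrow> L2 \<noteq> 0"
      "\<forall>y. conicF a b c 1 e (fst u, y, snd u) = y * (L1 + \<epsilon> * L2) + (R1 + \<epsilon> * R2)"
      using line[OF u(1)] by blast
    have G0: "L2 * R1 = L1 * R2" using u(2) l(6) by simp
    have Lnz: "L1 + \<epsilon> * L2 \<noteq> 0" using decomp_zero[OF l(1,2)] l(7) by blast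
    obtain r where r: "r \<in> ?K" "R1 + \<epsilon> * R2 = r * (L1 + \<epsilon> * L2)"
    proof (cases "L2 = 0")
      case True
      hence "L1 \<noteq> 0" using l(7) by blast
      hence "R2 = 0" using G0 True by simp
      have "R1 + \<epsilon> * R2 = (R1 / L1) * (L1 + \<epsilon> * L2)" using True \<open>R2 = 0\<close> \<open>L1 \<noteq> 0\<close> by simp
      thus ?thesis using that[of "R1 / L1"] l subF_divide by blast
    next
      case False
      have "R1 = (R2 / L2) * L1" using G0 False by (simp add: field_simps)
      hence "R1 + \<epsilon> * R2 = (R2 / L2) * (L1 + \<epsilon> * L2)" using False by (simp add: algebra_simps)
      thus ?thesis using that[of "R2 / L2"] l subF_divide by blast
    qed
    have "card {y \<in> ?K. y * (L1 + \<epsilon> * L2) + (R1 + \<epsilon> * R2) \<noteq> 0 \<and> (\<exists>t. t ^ 2 = y * (L1 + \<epsilon> * L2) + (R1 + \<epsilon> * R2))}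
           = (if (\<exists>t. t ^ 2 = L1 + \<epsilon> * L2) then q - 1 else 0)"
      by (rule root_count[OF r(1) Lnz r(2)])
    thus ?thesis using l(5,8) by (simp add: f_def sqL_def)
  qed
  have Nsq: "2 * card {u \<in> ?N. sqL u} = q + 1"
  proof -
    have b2K: "b1 \<in> ?K" "b2 \<in> ?K" using K by auto
    have lc: "2 * card {y \<in> ?K. y * (1 + \<epsilon> * 0) + (b1 + \<epsilon> * b2) \<noteq> 0 \<and> (\<exists>t. t ^ 2 = y * (1 + \<epsilon> * 0) + (b1 + \<epsilon> * b2))}
           + 2 * (if (\<exists>t. t ^ 2 = 1 + \<epsilon> * 0) then 1 else 0) = q + 1"
      by (rule line_count[OF subF_1 subF_0 b2K _ refl refl]) (use b2 in simp)
    have "(\<exists>t::'b. t ^ 2 = 1 + \<epsilon> * 0)" by (intro exI[of _ 1]) simp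
    hence lc2: "2 * card {y \<in> ?K. y + b \<noteq> 0 \<and> (\<exists>t. t ^ 2 = y + b)} + 2 = q + 1" using lc ab by simp
    have "{u \<in> ?N. sqL u} = (\<lambda>z. (1::'b, z)) ` {y \<in> ?K. y + b \<noteq> 0 \<and> (\<exists>t. t ^ 2 = y + b)} \<union> {(0, 1)}"
    proof (intro equalityI subsetI)
      fix u assume "u \<in> {u \<in> ?N. sqL u}"
      hence u: "u \<in> ?N" "sqL u" by auto
      show "u \<in> (\<lambda>z. (1::'b, z)) ` {y \<in> ?K. y + b \<noteq> 0 \<and> (\<exists>t. t ^ 2 = y + b)} \<union> {(0, 1)}"
      proof (cases "u = (0, 1)")
        case False
        then obtain z where z: "z \<in> ?K" "u = (1, z)" using u(1) unfolding normP1_def by blast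
        have "b + z \<noteq> 0"
        proof
          assume "b + z = 0" hence "b = - z" by (simp add: eq_neg_iff_add_eq_0)
          hence "b \<in> ?K" using z subF_uminus by simp
          hence "b1 + \<epsilon> * b2 = b + \<epsilon> * 0" using ab by simp
          thus False using decomp_unique[of b1 b2 b 0] K \<open>b \<in> ?K\<close> subF_0 b2 by simp
        qed
        thus ?thesis using u(2) z by (auto simp: sqL_def add.commute)
      qed simp
    next
      fix u assume "u \<in> (\<lambda>z. (1::'b, z)) ` {y \<in> ?K. y + b \<noteq> 0 \<and> (\<exists>t. t ^ 2 = y + b)} \<union> {(0, 1)}"
      thus "u \<in> {u \<in> ?N. sqL u}" unfolding normP1_def sqL_def
        by (auto simp: add.commute intro: exI[of _ 1])
    qed
    moreover have "card ((\<lambda>z. (1::'b, z)) ` {y \<in> ?K. y + b \<noteq> 0 \<and> (\<exists>t. t ^ 2 = y + b)} \<union> {(0, 1)})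
        = card {y \<in> ?K. y + b \<noteq> 0 \<and> (\<exists>t. t ^ 2 = y + b)} + 1"
      by (subst card_Un_disjoint) (auto simp: card_image inj_on_def)
    ultimately show ?thesis using lc2 by simp
  qed
  have n0le: "n0 \<le> 3"
  proof -
    have notall: "\<not> (cA = 0 \<and> cB = 0 \<and> cC = 0 \<and> cD = 0)"
    proof
      assume z: "cA = 0 \<and> cB = 0 \<and> cC = 0 \<and> cD = 0"
      have "b2 * (- (b1 + \<epsilon> * b2) * (c1 + \<epsilon> * c2) * 1 + (a1 + \<epsilon> * a2) * 1 ^ 2 + (b1 + \<epsilon> * b2) ^ 2 * (e1 + \<epsilon> * e2)) = 0"
        by (rule Delta_zero) (use z hA hB hC hD in simp_all)
      thus False using D ab b2 by simp
    qed
    let ?Z = "{z. cA + cB * z + cC * z ^ 2 + cD * z ^ 3 = 0}"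
    have sub: "N0 \<subseteq> (\<lambda>z. (1, z)) ` ?Z \<union> (if cD = 0 then {(0, 1)} else {})"
    proof
      fix u assume "u \<in> N0"
      hence u: "u \<in> ?N" "Gf u = 0" by (auto simp: N0_def)
      show "u \<in> (\<lambda>z. (1, z)) ` ?Z \<union> (if cD = 0 then {(0, 1)} else {})"
      proof (cases "u = (0, 1)")
        case True
        hence "cD = 0" using u(2) by (simp add: Gf_def)
        thus ?thesis using True by simp
      next
        case False
        then obtain z where z: "u = (1, z)" using u(1) unfolding normP1_def by blast
        hence "z \<in> ?Z" using u(2) by (simp add: Gf_def)
        thus ?thesis using z by blast
      qed
    qed
    show ?thesis
    proof (cases "cD = 0")
      case False
      have "card ?Z \<le> 3" by (rule card_roots_poly3) (use False in simp)
      moreover have "card N0 \<le> card ((\<lambda>z. (1::'b, z)) ` ?Z)" using sub False by (intro card_mono) auto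
      moreover have "card ((\<lambda>z. (1::'b, z)) ` ?Z) \<le> card ?Z" by (rule card_image_le) simp
      ultimately show ?thesis by (simp add: n0_def)
    next
      case True
      have "?Z = {z. cA + cB * z + cC * z ^ 2 + 0 * z ^ 3 = 0}" using True by simp
      have "card {z. cA + cB * z + cC * z ^ 2 = 0} \<le> 2"
      proof -
        let ?p = "[:cA, cB, cC:]"
        have "?p \<noteq> 0" using notall True by auto
        hence "card {z. poly ?p z = 0} \<le> degree ?p" by (rule card_poly_roots_bound)
        moreover have "degree ?p \<le> 2" by (simp add: degree_pCons_le)
        moreover have "{z. poly ?p z = 0} = {z. cA + cB * z + cC * z ^ 2 = 0}"
          by (simp add: algebra_simps power2_eq_square)
        ultimately show ?thesis by simp
      qed
      moreover have "card N0 \<le> card ((\<lambda>z. (1::'b, z)) ` {z. cA + cB * z + cC * z ^ 2 = 0} \<union> {(0, 1)})"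
        using sub True by (intro card_mono) auto
      moreover have "card ((\<lambda>z. (1::'b, z)) ` {z. cA + cB * z + cC * z ^ 2 = 0} \<union> {(0, 1)})
          \<le> card ((\<lambda>z. (1::'b, z)) ` {z. cA + cB * z + cC * z ^ 2 = 0}) + 1"
        by (simp add: card_insert_if)
      moreover have "card ((\<lambda>z. (1::'b, z)) ` {z. cA + cB * z + cC * z ^ 2 = 0}) \<le> card {z. cA + cB * z + cC * z ^ 2 = 0}"
        by (rule card_image_le) simp
      ultimately show ?thesis by (simp add: n0_def)
    qed
  qed
  have sle: "s \<le> n0" unfolding s_def n0_def by (intro card_mono) auto
  have fin0: "finite N0" by simp
  have S0: "(\<Sum>u\<in>N0. int (f u)) = (int q - 1) * int s"
  proof -
    have "(\<Sum>u\<in>N0. int (f u)) = (\<Sum>u\<in>N0. if sqL u then int q - 1 else 0)"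
      using fr N0sub q_pos by (intro sum.cong) (auto simp: N0_def of_nat_diff)
    also have "\<dots> = (\<Sum>u\<in>{u \<in> N0. sqL u}. int q - 1)" by (rule sum.inter_filter[symmetric]) simp
    finally show ?thesis by (simp add: s_def)
  qed
  have S1: "2 * (\<Sum>u\<in>?N - N0. int (f u)) = int (q + 1) * int (card (?N - N0)) - 2 * int (card {u \<in> ?N - N0. sqL u})"
  proof -
    have "2 * (\<Sum>u\<in>?N - N0. int (f u)) = (\<Sum>u\<in>?N - N0. 2 * int (f u))" by (simp add: sum_distrib_left)
    also have "\<dots> = (\<Sum>u\<in>?N - N0. int (q + 1) - 2 * (if sqL u then 1 else 0))"
    proof (rule sum.cong)
      fix u assume "u \<in> ?N - N0"
      hence "u \<in> ?N" "Gf u \<noteq> 0" by (auto simp: N0_def)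
      from fnr[OF this] show "2 * int (f u) = int (q + 1) - 2 * (if sqL u then 1 else 0)" by auto
    qed simp
    also have "\<dots> = int (q + 1) * int (card (?N - N0)) - 2 * (\<Sum>u\<in>?N - N0. if sqL u then 1 else 0)"
      by (simp add: sum_subtractf sum_distrib_left)
    also have "(\<Sum>u\<in>?N - N0. if sqL u then 1 else (0::int)) = int (card {u \<in> ?N - N0. sqL u})"
      using sum.inter_filter[of "?N - N0" "\<lambda>_. (1::int)" sqL] by simp
    finally show ?thesis .
  qed
  have cNN0: "card (?N - N0) = q + 1 - n0" using card_normP1 N0sub by (simp add: card_Diff_subset n0_def)
  have cSq: "card {u \<in> ?N - N0. sqL u} + s = card {u \<in> ?N. sqL u}"
  proof -
    have "{u \<in> ?N. sqL u} = {u \<in> ?N - N0. sqL u} \<union> {u \<in> N0. sqL u}" using N0sub by auto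
    moreover have "{u \<in> ?N - N0. sqL u} \<inter> {u \<in> N0. sqL u} = {}" by auto
    ultimately show ?thesis by (simp add: s_def card_Un_disjoint)
  qed
  have n0N: "n0 \<le> q + 1" using card_mono[OF finN N0sub] card_normP1 by (simp add: n0_def)
  have sumsplit: "(\<Sum>u\<in>?N. int (f u)) = (\<Sum>u\<in>?N - N0. int (f u)) + (\<Sum>u\<in>N0. int (f u))"
    using sum.subset_diff[OF N0sub finN] by simp
  have key: "2 * int (Eq_conic q a b c 1 e) = int q ^ 2 + (int (2 + 2 * s) - int n0 - 1) * int q - int n0"
  proof -
    have "2 * int (Eq_conic q a b c 1 e) = 2 * (\<Sum>u\<in>?N. int (f u))" using E by simp
    also have "\<dots> = int (q + 1) * int (q + 1 - n0) - 2 * int (card {u \<in> ?N - N0. sqL u}) + 2 * ((int q - 1) * int s)"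
      using sumsplit S0 S1 cNN0 by simp
    also have "int (card {u \<in> ?N - N0. sqL u}) = int (card {u \<in> ?N. sqL u}) - int s" using cSq by simp
    finally have h1: "2 * int (Eq_conic q a b c 1 e) = int (q + 1) * int (q + 1 - n0) - 2 * (int (card {u \<in> ?N. sqL u}) - int s) + 2 * ((int q - 1) * int s)" .
    have h2: "2 * int (card {u \<in> ?N. sqL u}) = int q + 1" using Nsq by simp
    have h3: "int (q + 1 - n0) = int q + 1 - int n0" using n0N by simp
    show ?thesis using h1 h2 h3 by (simp add: algebra_simps power2_eq_square)
  qed
  show ?thesis
  proof (rule exI[of _ "int (2 + 2 * s) - int n0"])
    have cases: "(n0 \<in> {0, 2} \<and> int (2 + 2 * s) - int n0 \<in> {-2, 0, 2, 4}) \<or>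
                 (n0 \<in> {1, 3} \<and> int (2 + 2 * s) - int n0 \<in> {-1, 1, 3, 5, 7})"
      using n0le sle by (auto simp: le_Suc_eq numeral_3_eq_3 numeral_2_eq_2)
    show "let n0' = card (n0_points (subF q) \<omega> b1 1 b2 0 cA cB cC cD)
      in 2 * int (Eq_conic q a b c 1 e) = int q ^ 2 + (int (2 + 2 * s) - int n0 - 1) * int q - int n0'
       \<and> ((n0' \<in> {0, 2} \<and> int (2 + 2 * s) - int n0 \<in> {-2, 0, 2, 4}) \<or> (n0' \<in> {1, 3} \<and> int (2 + 2 * s) - int n0 \<in> {-1, 1, 3, 5, 7}))"
      unfolding n0_eq Let_def using key cases by simp
  qed
qed
end

theorem mainTheorem10:
  fixes q :: nat and \<omega> \<epsilon> a b c d e :: "'b::{finite, field}"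
  assumes q_pp: "\<exists>p k. prime p \<and> k > 0 \<and> q = p ^ k"
    and q_odd: "odd q"
    and card: "card (UNIV :: 'b set) = q ^ 2"
    and \<omega>_in: "\<omega> \<in> subF q"
    and \<omega>_nonsq: "\<not> (\<exists>s \<in> subF q. s ^ 2 = \<omega>)"
    and \<epsilon>_sq: "\<epsilon> ^ 2 = \<omega>"
    and nonsing: "conic_nonsingular a b c d e"
    and d1: "d = 1"
    and b_notin: "b \<notin> subF q"
    and sq: "- b * c * d + a * d ^ 2 + b ^ 2 * e \<noteq> 0"
            "\<exists>s. s ^ 2 = - b * c * d + a * d ^ 2 + b ^ 2 * e"
    and S_nonsing: "cubicS_nonsingular \<omega>
       (comp1 (subF q) \<epsilon> b) (comp1 (subF q) \<epsilon> d) (comp2 (subF q) \<epsilon> b) (comp2 (subF q) \<epsilon> d)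
       (- comp2 (subF q) \<epsilon> a * comp1 (subF q) \<epsilon> b + comp1 (subF q) \<epsilon> a * comp2 (subF q) \<epsilon> b)
       (comp2 (subF q) \<epsilon> b * comp1 (subF q) \<epsilon> c - comp1 (subF q) \<epsilon> b * comp2 (subF q) \<epsilon> c
          - comp2 (subF q) \<epsilon> a * comp1 (subF q) \<epsilon> d + comp1 (subF q) \<epsilon> a * comp2 (subF q) \<epsilon> d)
       (- comp2 (subF q) \<epsilon> c * comp1 (subF q) \<epsilon> d + comp1 (subF q) \<epsilon> c * comp2 (subF q) \<epsilon> d
          + comp2 (subF q) \<epsilon> b * comp1 (subF q) \<epsilon> e - comp1 (subF q) \<epsilon> b * comp2 (subF q) \<epsilon> e)
       (comp2 (subF q) \<epsilon> d * comp1 (subF q) \<epsilon> e - comp1 (subF q) \<epsilon> d * comp2 (subF q) \<epsilon> e)"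
  shows "\<exists>\<alpha>::int.
    let n0 = card (n0_points (subF q) \<omega>
       (comp1 (subF q) \<epsilon> b) (comp1 (subF q) \<epsilon> d) (comp2 (subF q) \<epsilon> b) (comp2 (subF q) \<epsilon> d)
       (- comp2 (subF q) \<epsilon> a * comp1 (subF q) \<epsilon> b + comp1 (subF q) \<epsilon> a * comp2 (subF q) \<epsilon> b)
       (comp2 (subF q) \<epsilon> b * comp1 (subF q) \<epsilon> c - comp1 (subF q) \<epsilon> b * comp2 (subF q) \<epsilon> c
          - comp2 (subF q) \<epsilon> a * comp1 (subF q) \<epsilon> d + comp1 (subF q) \<epsilon> a * comp2 (subF q) \<epsilon> d)
       (- comp2 (subF q) \<epsilon> c * comp1 (subF q) \<epsilon> d + comp1 (subF q) \<epsilon> c * comp2 (subF q) \<epsilon> d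
          + comp2 (subF q) \<epsilon> b * comp1 (subF q) \<epsilon> e - comp1 (subF q) \<epsilon> b * comp2 (subF q) \<epsilon> e)
       (comp2 (subF q) \<epsilon> d * comp1 (subF q) \<epsilon> e - comp1 (subF q) \<epsilon> d * comp2 (subF q) \<epsilon> e))
    in 2 * int (Eq_conic q a b c d e) = int q ^ 2 + (\<alpha> - 1) * int q - int n0
       \<and> ((n0 \<in> {0, 2} \<and> \<alpha> \<in> {-2, 0, 2, 4}) \<or> (n0 \<in> {1, 3} \<and> \<alpha> \<in> {-1, 1, 3, 5, 7}))"
proof -
  interpret ffs q \<epsilon> \<omega> using q_pp q_odd card \<omega>_in \<omega>_nonsq \<epsilon>_sq by unfold_locales
  obtain a1 a2 where a: "a1 \<in> subF q" "a2 \<in> subF q" "a = a1 + \<epsilon> * a2" using decomp_exists by blast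
  obtain b1 b2 where b: "b1 \<in> subF q" "b2 \<in> subF q" "b = b1 + \<epsilon> * b2" using decomp_exists by blast
  obtain c1 c2 where c: "c1 \<in> subF q" "c2 \<in> subF q" "c = c1 + \<epsilon> * c2" using decomp_exists by blast
  obtain e1 e2 where e: "e1 \<in> subF q" "e2 \<in> subF q" "e = e1 + \<epsilon> * e2" using decomp_exists by blast
  have one: "(1::'b) = 1 + \<epsilon> * 0" by simp
  have c11: "comp1 (subF q) \<epsilon> 1 = 1" using comp1_eq[OF subF_1 subF_0] by simp
  have c21: "comp2 (subF q) \<epsilon> 1 = 0" using comp2_eq[OF subF_1 subF_0] by simp
  have ca: "comp1 (subF q) \<epsilon> a = a1" "comp2 (subF q) \<epsilon> a = a2" using a comp1_eq comp2_eq by simp_all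
  have cb: "comp1 (subF q) \<epsilon> b = b1" "comp2 (subF q) \<epsilon> b = b2" using b comp1_eq comp2_eq by simp_all
  have cc: "comp1 (subF q) \<epsilon> c = c1" "comp2 (subF q) \<epsilon> c = c2" using c comp1_eq comp2_eq by simp_all
  have ce: "comp1 (subF q) \<epsilon> e = e1" "comp2 (subF q) \<epsilon> e = e2" using e comp1_eq comp2_eq by simp_all
  have b2nz: "b2 \<noteq> 0"
  proof
    assume "b2 = 0" hence "b = b1" using b(3) by simp
    thus False using b_notin b(1) by simp
  qed
  have ns1: "conic_nonsingular a b c 1 e" using nonsing d1 by simp
  have D1: "- b * c * 1 + a * 1 ^ 2 + b ^ 2 * e \<noteq> 0" using sq(1) d1 by simp
  have D2: "\<exists>s. s ^ 2 = - b * c * 1 + a * 1 ^ 2 + b ^ 2 * e" using sq(2) d1 by simp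
  have mc: "\<exists>\<alpha>::int. let n0 = card (n0_points (subF q) \<omega> b1 1 b2 0
        (- a2 * b1 + a1 * b2) (b2 * c1 - b1 * c2 - a2 * 1 + a1 * 0)
        (- c2 * 1 + c1 * 0 + b2 * e1 - b1 * e2) (0 * e1 - 1 * e2))
    in 2 * int (Eq_conic q a b c 1 e) = int q ^ 2 + (\<alpha> - 1) * int q - int n0
       \<and> ((n0 \<in> {0, 2} \<and> \<alpha> \<in> {-2, 0, 2, 4}) \<or> (n0 \<in> {1, 3} \<and> \<alpha> \<in> {-1, 1, 3, 5, 7}))"
    by (rule main_count[OF a(1,2) b(1,2) c(1,2) e(1,2) a(3) b(3) c(3) e(3) b2nz ns1 D1 D2]) simp_all
  show ?thesis unfolding d1 ca cb cc ce c11 c21 using mc .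
qed

end
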